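(* Let $P$ be a poset. If $P$ is well-quasi-ordered and the set $\mathcal{J}^{\neg\downarrow}(P)$ of non-principal ideals of $P$, ordered by inclusion, is better-quasi-ordered, then $P$ is better-quasi-ordered.
   Context: An ideal of $P$ is a nonempty subset $I\subseteq P$ which is an initial segment (if $x\leq y$ and $y\in I$ then $x\in I$) and is up-directed (any two elements of $I$ have an upper bound in $I$). An ideal is principal if it has a largest element, i.e. is of the form $\downarrow x=\{y: y\leq x\}$. A quasi-ordered set is well-quasi-ordered (wqo) if it is well-founded and has no infinite antichain. Barriers and bqo: finite subsets of $\mathbb{N}$ are identified with their increasing enumerations. For finite $s,t\subseteq\mathbb{N}$ write $s\triangleleft t$ if there is a finite $r\subseteq\mathbb{N}$ such that $s$ is a proper initial segment of $r$ and $t$ is $r$ with its least element removed. A barrier is an infinite set $B$ of finite subsets of $\mathbb{N}$, no member of which is a proper subset of another, such that every infinite $X\subseteq\bigcup B$ has a nonempty initial segment belonging to $B$. A barrier is well-ordered by the lexicographic order; its order type is the type of this well-order. A map $f$ from a barrier $B$ into a quasi-ordered set $Q$ is good if there exist $s,t\in B$ with $s\triangleleft t$ and $f(s)\leq f(t)$, and bad otherwise. For a countable ordinal $\alpha$, $Q$ is $\alpha$-bqo if every map from a barrier of order type at most $\alpha$ into $Q$ is good; $Q$ is better-quasi-ordered (bqo) if it is $\alpha$-bqo for every countable ordinal $\alpha$. *)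

theory Defs
  imports Main "HOL-Library.Countable_Set"
begin

definition quasi_order_on :: "'a set \<Rightarrow> ('a \<Rightarrow> 'a \<Rightarrow> bool) \<Rightarrow> bool" where
  "quasi_order_on Q le \<longleftrightarrow> (\<forall>x\<in>Q. le x x) \<and>
     (\<forall>x\<in>Q. \<forall>y\<in>Q. \<forall>z\<in>Q. le x y \<longrightarrow> le y z \<longrightarrow> le x z)"

definition poset_on :: "'a set \<Rightarrow> ('a \<Rightarrow> 'a \<Rightarrow> bool) \<Rightarrow> bool" where
  "poset_on P le \<longleftrightarrow> quasi_order_on P le \<and>
     (\<forall>x\<in>P. \<forall>y\<in>P. le x y \<longrightarrow> le y x \<longrightarrow> x = y)"

definition wqo_on :: "'a set \<Rightarrow> ('a \<Rightarrow> 'a \<Rightarrow> bool) \<Rightarrow> bool" where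
  "wqo_on Q le \<longleftrightarrow> quasi_order_on Q le \<and>
     \<not> (\<exists>g::nat \<Rightarrow> 'a. \<forall>i. g i \<in> Q \<and> le (g (Suc i)) (g i) \<and> \<not> le (g i) (g (Suc i))) \<and>
     (\<forall>A\<subseteq>Q. (\<forall>x\<in>A. \<forall>y\<in>A. x \<noteq> y \<longrightarrow> \<not> le x y) \<longrightarrow> finite A)"

definition ideal_on :: "'a set \<Rightarrow> ('a \<Rightarrow> 'a \<Rightarrow> bool) \<Rightarrow> 'a set \<Rightarrow> bool" where
  "ideal_on P le I \<longleftrightarrow> I \<noteq> {} \<and> I \<subseteq> P \<and>
     (\<forall>x\<in>P. \<forall>y\<in>I. le x y \<longrightarrow> x \<in> I) \<and>
     (\<forall>x\<in>I. \<forall>y\<in>I. \<exists>z\<in>I. le x z \<and> le y z)"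

definition principal_on :: "'a set \<Rightarrow> ('a \<Rightarrow> 'a \<Rightarrow> bool) \<Rightarrow> 'a set \<Rightarrow> bool" where
  "principal_on P le I \<longleftrightarrow> (\<exists>x\<in>P. I = {y\<in>P. le y x})"

definition nonprincipal_ideals :: "'a set \<Rightarrow> ('a \<Rightarrow> 'a \<Rightarrow> bool) \<Rightarrow> 'a set set" where
  "nonprincipal_ideals P le = {I. ideal_on P le I \<and> \<not> principal_on P le I}"

text \<open>Finite subsets of nat identified with their increasing enumerations.\<close>
abbreviation enum :: "nat set \<Rightarrow> nat list" where
  "enum s \<equiv> sorted_list_of_set s"

definition shift_rel :: "nat set \<Rightarrow> nat set \<Rightarrow> bool" (infix "\<lhd>\<^sub>B" 50) where
  "s \<lhd>\<^sub>B t \<longleftrightarrow> finite s \<and> (\<exists>r. finite r \<and> (\<exists>xs. xs \<noteq> [] \<and> enum r = enum s @ xs) \<and>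
      t = r - {Min r})"

definition init_seg_of_set :: "nat set \<Rightarrow> nat set \<Rightarrow> bool" where
  "init_seg_of_set s X \<longleftrightarrow> finite s \<and> s \<subseteq> X \<and> (\<forall>x\<in>X. \<forall>y\<in>s. x < y \<longrightarrow> x \<in> s)"

definition barrier :: "nat set set \<Rightarrow> bool" where
  "barrier B \<longleftrightarrow> infinite B \<and> (\<forall>s\<in>B. finite s) \<and>
     (\<forall>s\<in>B. \<forall>t\<in>B. \<not> s \<subset> t) \<and>
     (\<forall>X. X \<subseteq> \<Union>B \<longrightarrow> infinite X \<longrightarrow>
        (\<exists>s\<in>B. s \<noteq> {} \<and> init_seg_of_set s X))"

text \<open>Lexicographic order on a barrier (reflexive, as a well-order relation).\<close>
definition barrier_lex :: "nat set set \<Rightarrow> nat set rel" where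
  "barrier_lex B = {(s, t). s \<in> B \<and> t \<in> B \<and>
     (s = t \<or> (enum s, enum t) \<in> lexord {(x, y). x < y})}"

definition good_map :: "nat set set \<Rightarrow> ('a \<Rightarrow> 'a \<Rightarrow> bool) \<Rightarrow> (nat set \<Rightarrow> 'a) \<Rightarrow> bool" where
  "good_map B le f \<longleftrightarrow> (\<exists>s\<in>B. \<exists>t\<in>B. s \<lhd>\<^sub>B t \<and> le (f s) (f t))"

definition alpha_bqo_on :: "'b rel \<Rightarrow> 'a set \<Rightarrow> ('a \<Rightarrow> 'a \<Rightarrow> bool) \<Rightarrow> bool" where
  "alpha_bqo_on \<alpha> Q le \<longleftrightarrow> (\<forall>B f. barrier B \<longrightarrow> (barrier_lex B, \<alpha>) \<in> ordLeq \<longrightarrow>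
      f ` B \<subseteq> Q \<longrightarrow> good_map B le f)"

text \<open>Countable ordinals are represented by well-orders on (subsets of) nat.\<close>
definition countable_ordinal :: "'b rel \<Rightarrow> bool" where
  "countable_ordinal \<alpha> \<longleftrightarrow> Well_order \<alpha> \<and> countable (Field \<alpha>)"

definition bqo_on :: "'a set \<Rightarrow> ('a \<Rightarrow> 'a \<Rightarrow> bool) \<Rightarrow> bool" where
  "bqo_on Q le \<longleftrightarrow> quasi_order_on Q le \<and>
     (\<forall>\<alpha> :: nat rel. countable_ordinal \<alpha> \<longrightarrow> alpha_bqo_on \<alpha> Q le)"

end

theory Submission
  imports Defs "HOL-Library.Ramsey"
begin


definition gt :: "nat set \<Rightarrow> nat set" where "gt v = {x. \<forall>y\<in>v. y < x}"

abbreviation iseg :: "nat set \<Rightarrow> nat set \<Rightarrow> bool" where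
  "iseg s X \<equiv> init_seg_of_set s X"

lemma iseg_finite: "iseg s X \<Longrightarrow> finite s"
  unfolding init_seg_of_set_def by blast

lemma iseg_subset: "iseg s X \<Longrightarrow> s \<subseteq> X"
  unfolding init_seg_of_set_def by blast

lemma iseg_cmp:
  assumes "iseg a X" "iseg b X"
  shows "iseg a b \<or> iseg b a"
proof (cases "a \<subseteq> b")
  case True
  then show ?thesis using assms unfolding init_seg_of_set_def by blast
next
  case False
  then obtain y where y: "y \<in> a" "y \<notin> b" by blast
  have "b \<subseteq> a"
  proof
    fix x assume x: "x \<in> b"
    have "y \<in> X" using y assms unfolding init_seg_of_set_def by blast
    have "\<not> y < x" using x y assms \<open>y \<in> X\<close> unfolding init_seg_of_set_def by blast
    moreover have "x \<noteq> y" using x y by blast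
    ultimately have "x < y" by simp
    moreover have "x \<in> X" using x assms unfolding init_seg_of_set_def by blast
    ultimately show "x \<in> a" using y assms unfolding init_seg_of_set_def by blast
  qed
  then show ?thesis using assms unfolding init_seg_of_set_def by blast
qed

lemma iseg_trans: "iseg a b \<Longrightarrow> iseg b X \<Longrightarrow> iseg a X"
  unfolding init_seg_of_set_def by blast

lemma iseg_refl: "finite a \<Longrightarrow> iseg a a"
  unfolding init_seg_of_set_def by blast

lemma iseg_empty: "iseg {} X"
  unfolding init_seg_of_set_def by blast

lemma iseg_diff_gt: "iseg v t \<Longrightarrow> t - v \<subseteq> gt v"
  unfolding init_seg_of_set_def gt_def by (auto, metis linorder_neqE_nat)

lemma iseg_union_gt:
  assumes "finite v" "X \<subseteq> gt v" "iseg u X"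
  shows "iseg (v \<union> u) (v \<union> X)"
  unfolding init_seg_of_set_def
proof (intro conjI ballI impI)
  show "finite (v \<union> u)" using assms iseg_finite by blast
  show "v \<union> u \<subseteq> v \<union> X" using assms iseg_subset by blast
  fix x y assume xy: "x \<in> v \<union> X" "y \<in> v \<union> u" "x < y"
  show "x \<in> v \<union> u"
  proof (cases "x \<in> v")
    case False
    then have xX: "x \<in> X" using xy by blast
    show ?thesis
    proof (cases "y \<in> v")
      case True
      then have "y < x" using xX assms(2) unfolding gt_def by blast
      then show ?thesis using xy by simp
    next
      case False
      then have "y \<in> u" using xy by blast
      then show ?thesis using xX xy(3) assms(3) unfolding init_seg_of_set_def by blast
    qed
  qed simp
qed

lemma iseg_union_gt_self:
  assumes "finite v" "X \<subseteq> gt v"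
  shows "iseg v (v \<union> X)"
  using iseg_union_gt[OF assms iseg_empty] by simp

lemma iseg_diff:
  assumes "iseg v t" "iseg t (v \<union> X)" "X \<subseteq> gt v"
  shows "iseg (t - v) X"
proof -
  have "t \<subseteq> v \<union> X" using assms(2) iseg_subset by blast
  moreover have "\<forall>x\<in>X. x \<notin> v" using assms(3) unfolding gt_def by blast
  ultimately show ?thesis using assms(1,2) unfolding init_seg_of_set_def by blast
qed


lemma iseg_Min:
  assumes "iseg s X" "s \<noteq> {}" "finite X"
  shows "Min X = Min s"
proof -
  have "Min s \<in> X" using assms iseg_subset iseg_finite Min_in by blast
  moreover have "\<forall>x\<in>X. Min s \<le> x"
  proof
    fix x assume "x \<in> X"
    show "Min s \<le> x"
    proof (rule ccontr)
      assume "\<not> Min s \<le> x"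
      then have "x \<in> s" using assms \<open>x \<in> X\<close> Min_in iseg_finite unfolding init_seg_of_set_def
        by (metis not_le)
      then show False using \<open>\<not> Min s \<le> x\<close> assms iseg_finite by auto
    qed
  qed
  ultimately show ?thesis using assms by (intro Min_eqI) auto
qed

lemma iseg_Min_inf:
  assumes "iseg s X" "s \<noteq> {}"
  shows "Min s \<in> X" "\<forall>x\<in>X. Min s \<le> x"
proof -
  show "Min s \<in> X" using assms iseg_subset iseg_finite Min_in by blast
  show "\<forall>x\<in>X. Min s \<le> x"
  proof
    fix x assume "x \<in> X"
    show "Min s \<le> x"
    proof (rule ccontr)
      assume "\<not> Min s \<le> x"
      then have "x \<in> s" using assms \<open>x \<in> X\<close> Min_in iseg_finite unfolding init_seg_of_set_def
        by (metis not_le)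
      then show False using \<open>\<not> Min s \<le> x\<close> assms iseg_finite by auto
    qed
  qed
qed

lemma iseg_remove_min:
  assumes "iseg s X" "s \<noteq> {}"
  shows "iseg (s - {Min s}) (X - {Min s})"
  using assms unfolding init_seg_of_set_def by auto

lemma enum_append_iff:
  assumes "finite s" "finite r"
  shows "(\<exists>xs. xs \<noteq> [] \<and> enum r = enum s @ xs) \<longleftrightarrow> iseg s r \<and> s \<noteq> r"
proof
  assume "\<exists>xs. xs \<noteq> [] \<and> enum r = enum s @ xs"
  then obtain xs where xs: "xs \<noteq> []" "enum r = enum s @ xs" by blast
  have sr: "r = s \<union> set xs" using xs assms
    by (metis set_append sorted_list_of_set.set_sorted_key_list_of_set)
  have sw: "sorted_wrt (<) (enum s @ xs)" using xs(2) assms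
    by (metis sorted_list_of_set.strict_sorted_key_list_of_set)
  then have lt: "\<forall>y\<in>s. \<forall>x\<in>set xs. y < x" using assms
    by (simp add: sorted_wrt_append)
  have "iseg s r" unfolding init_seg_of_set_def
  proof (intro conjI ballI impI)
    show "finite s" "s \<subseteq> r" using assms sr by auto
    fix x y assume "x \<in> r" "y \<in> s" "x < y"
    then show "x \<in> s" using sr lt by (metis Un_iff not_less_iff_gr_or_eq)
  qed
  moreover have "s \<noteq> r"
  proof
    assume "s = r"
    then have "length (enum r) = length (enum s)" by simp
    then show False using xs by simp
  qed
  ultimately show "iseg s r \<and> s \<noteq> r" by blast
next
  assume a: "iseg s r \<and> s \<noteq> r"
  define xs where "xs = enum (r - s)"
  have fin: "finite (r - s)" using assms by simp
  have ne: "r - s \<noteq> {}" using a iseg_subset by blast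
  have "xs \<noteq> []" using xs_def fin ne by simp
  moreover have "enum r = enum s @ xs"
  proof -
    have "sorted_wrt (<) (enum s @ xs)"
    proof -
      have "\<forall>y\<in>s. \<forall>x\<in>r - s. y < x" using a unfolding init_seg_of_set_def
        by (metis DiffD1 DiffD2 linorder_neqE_nat)
      then show ?thesis using assms fin unfolding xs_def
        by (simp add: sorted_wrt_append)
    qed
    moreover have "set (enum s @ xs) = r" using assms fin a iseg_subset unfolding xs_def by auto
    moreover have "length (enum s @ xs) = card r"
    proof -
      have "card r = card s + card (r - s)" using assms a iseg_subset
        by (metis card_Diff_subset card_mono le_add_diff_inverse)
      then show ?thesis unfolding xs_def by simp
    qed
    ultimately show ?thesis using assms(2) sorted_list_of_set_unique by blast
  qed
  ultimately show "\<exists>xs. xs \<noteq> [] \<and> enum r = enum s @ xs" by blast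
qed

lemma shift_rel_iff:
  "s \<lhd>\<^sub>B t \<longleftrightarrow> finite s \<and> (\<exists>r. finite r \<and> iseg s r \<and> s \<noteq> r \<and> t = r - {Min r})"
proof -
  have "\<And>r. finite s \<Longrightarrow> finite r \<Longrightarrow>
     (\<exists>xs. xs \<noteq> [] \<and> enum r = enum s @ xs) = (iseg s r \<and> s \<noteq> r)"
    using enum_append_iff by blast
  then show ?thesis unfolding shift_rel_def by (metis (no_types, lifting))
qed

lemma shift_relI:
  assumes "finite s" "s \<noteq> {}" "finite t" "iseg (s - {Min s}) t" "s - {Min s} \<noteq> t"
    "\<forall>x\<in>t. Min s < x"
  shows "s \<lhd>\<^sub>B t"
proof -
  define m where "m = Min s"
  have ms: "m \<in> s" "\<forall>x\<in>s. m \<le> x" using assms m_def by auto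
  define r where "r = insert m t"
  have fr: "finite r" using assms r_def by simp
  have mr: "Min r = m"
  proof (rule Min_eqI)
    show "finite r" by fact
    show "m \<in> r" using r_def by simp
    fix y assume "y \<in> r" then show "m \<le> y" using r_def assms(6) m_def by auto
  qed
  have sub1: "s - {m} \<subseteq> t" using assms(4) iseg_subset m_def by blast
  have s_sub: "s \<subseteq> r" using sub1 r_def by blast
  have "iseg s r" unfolding init_seg_of_set_def
  proof (intro conjI ballI impI)
    show "finite s" by fact
    show "s \<subseteq> r" by fact
  next
    fix x y assume xy: "x \<in> r" "y \<in> s" "x < y"
    show "x \<in> s"
    proof (cases "x = m")
      case True then show ?thesis using ms by blast
    next
      case False
      then have xt: "x \<in> t" using xy(1) r_def by blast
      have "m < x" using xt assms(6) m_def by blast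
      then have "y \<noteq> m" using xy(3) by simp
      then have "y \<in> s - {m}" using xy(2) by blast
      then have "x \<in> s - {m}" using assms(4) xt xy(3) unfolding init_seg_of_set_def m_def by blast
      then show ?thesis by blast
    qed
  qed
  moreover have "s \<noteq> r"
  proof
    assume "s = r"
    then have "t \<subseteq> s - {m}" using r_def assms(6) m_def by auto
    then show False using sub1 assms(5) m_def by blast
  qed
  moreover have "t = r - {Min r}" using mr r_def assms(6) m_def by auto
  ultimately show ?thesis using shift_rel_iff assms fr by blast
qed

lemma shift_relD:
  assumes "s \<lhd>\<^sub>B t" "s \<noteq> {}"
  shows "finite t" "iseg (s - {Min s}) t" "s - {Min s} \<noteq> t" "\<forall>x\<in>t. Min s < x"
proof -
  obtain r where r: "finite r" "iseg s r" "s \<noteq> r" "t = r - {Min r}" and fs: "finite s"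
    using assms shift_rel_iff by blast
  have mr: "Min r = Min s" using iseg_Min r assms by blast
  have sr: "s \<subseteq> r" using r iseg_subset by blast
  have ms: "Min s \<in> s" using fs assms Min_in by blast
  show "finite t" using r by simp
  show "iseg (s - {Min s}) t" using iseg_remove_min[OF r(2) assms(2)] r mr by simp
  show "s - {Min s} \<noteq> t"
  proof
    assume a: "s - {Min s} = t"
    have "r = insert (Min s) t" using r(4) mr r(1) ms sr by auto
    then have "r = s" using a ms by auto
    then show False using r by simp
  qed
  show "\<forall>x\<in>t. Min s < x"
  proof
    fix x assume "x \<in> t"
    then have "x \<in> r" "x \<noteq> Min s" using r(4) mr by auto
    then have "Min r \<le> x" using r(1) by simp
    then show "Min s < x" using mr \<open>x \<noteq> Min s\<close> by simp
  qed
qed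




lemma infinite_gt: "infinite Z \<Longrightarrow> finite s \<Longrightarrow> infinite (Z \<inter> gt s)"
proof -
  assume Z: "infinite Z" and s: "finite s"
  have "Z \<inter> gt s \<supseteq> Z - {..Max s}" when "s \<noteq> {}"
  proof
    fix x assume "x \<in> Z - {..Max s}"
    then have "x \<in> Z" "Max s < x" by auto
    moreover have "\<forall>y\<in>s. y < x" using Max_ge[OF s] \<open>Max s < x\<close> le_less_trans by blast
    ultimately show "x \<in> Z \<inter> gt s" unfolding gt_def by blast
  qed
  moreover have "gt {} = UNIV" unfolding gt_def by simp
  ultimately show ?thesis using Z
    by (metis Diff_infinite_finite finite_atMost finite_subset inf_top.right_neutral)
qed

lemma gt_empty[simp]: "gt {} = UNIV" unfolding gt_def by simp

lemma fusion_fin: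
  fixes Q :: "nat set \<Rightarrow> nat set \<Rightarrow> bool"
  assumes her0: "\<forall>s Y Y'. Q s Y \<and> Y' \<subseteq> Y \<and> infinite Y' \<longrightarrow> Q s Y'"
    and den0: "\<forall>s Y. finite s \<and> infinite Y \<longrightarrow> (\<exists>Y'\<subseteq>Y. infinite Y' \<and> Q s Y')"
  shows "finite S \<Longrightarrow> (\<forall>s\<in>S. finite s) \<Longrightarrow> infinite Y \<Longrightarrow> \<exists>Y'\<subseteq>Y. infinite Y' \<and> (\<forall>s\<in>S. Q s Y')"
proof (induction S arbitrary: Y rule: finite_induct)
  have her: "\<And>s Y Y'. Q s Y \<Longrightarrow> Y' \<subseteq> Y \<Longrightarrow> infinite Y' \<Longrightarrow> Q s Y'" using her0 by blast
  have den: "\<And>s Y. finite s \<Longrightarrow> infinite Y \<Longrightarrow> \<exists>Y'\<subseteq>Y. infinite Y' \<and> Q s Y'" using den0 by blast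
  case empty then show ?case by blast
next
  have her: "\<And>s Y Y'. Q s Y \<Longrightarrow> Y' \<subseteq> Y \<Longrightarrow> infinite Y' \<Longrightarrow> Q s Y'" using her0 by blast
  have den: "\<And>s Y. finite s \<Longrightarrow> infinite Y \<Longrightarrow> \<exists>Y'\<subseteq>Y. infinite Y' \<and> Q s Y'" using den0 by blast
  case (insert x F)
  have h: "\<forall>s\<in>F. finite s" "infinite Y" using insert.prems by auto
  obtain Y1 where Y1: "Y1 \<subseteq> Y" "infinite Y1" "\<forall>s\<in>F. Q s Y1" using insert.IH[OF h] by blast
  obtain Y2 where Y2: "Y2 \<subseteq> Y1" "infinite Y2" "Q x Y2" using den[of x Y1] insert.prems Y1 by auto
  have "\<forall>s\<in>F. Q s Y2" using Y1 Y2 her by blast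
  moreover have "Y2 \<subseteq> Y" using Y1 Y2 by blast
  ultimately show ?case using Y2 by blast
qed

lemma fusion:
  fixes Q :: "nat set \<Rightarrow> nat set \<Rightarrow> bool"
  assumes her: "\<And>s Y Y'. Q s Y \<Longrightarrow> Y' \<subseteq> Y \<Longrightarrow> infinite Y' \<Longrightarrow> Q s Y'"
    and den: "\<And>s Y. finite s \<Longrightarrow> infinite Y \<Longrightarrow> \<exists>Y'\<subseteq>Y. infinite Y' \<and> Q s Y'"
    and Y: "infinite Y"
  shows "\<exists>Z\<subseteq>Y. infinite Z \<and> (\<forall>s. finite s \<and> s \<subseteq> Z \<longrightarrow> Q s (Z \<inter> gt s))"
proof -
  define P0 where "P0 = (\<lambda>Y'. Y' \<subseteq> Y \<and> infinite Y' \<and> Q {} Y')"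
  define PS where "PS = (\<lambda>R Y'. Y' \<subseteq> R \<inter> {Inf R<..} \<and> infinite Y' \<and> (\<forall>s. s \<subseteq> {..Inf R} \<longrightarrow> Q s Y'))"
  define R where "R = rec_nat (SOME Y'. P0 Y') (\<lambda>k Rk. SOME Y'. PS Rk Y')"
  have R0: "R 0 = (SOME Y'. P0 Y')" unfolding R_def by simp
  have RS: "\<And>k. R (Suc k) = (SOME Y'. PS (R k) Y')" unfolding R_def by simp
  have ex0: "\<exists>Y'. P0 Y'" using den[of "{}" Y] Y unfolding P0_def by auto
  have exS: "\<exists>Y'. PS R' Y'" if "infinite R'" for R'
  proof -
    have "infinite (R' \<inter> {Inf R'<..})"
    proof -
      have "R' - {..Inf R'} \<subseteq> R' \<inter> {Inf R'<..}" by auto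
      moreover have "infinite (R' - {..Inf R'})" using that by simp
      ultimately show ?thesis using finite_subset by blast
    qed
    moreover have "finite (Pow {..Inf R'})" by simp
    moreover have "\<forall>s\<in>Pow {..Inf R'}. finite s" by (simp add: finite_subset)
    moreover have h1: "\<forall>s Y Y'. Q s Y \<and> Y' \<subseteq> Y \<and> infinite Y' \<longrightarrow> Q s Y'" using her by blast
    moreover have h2: "\<forall>s Y. finite s \<and> infinite Y \<longrightarrow> (\<exists>Y'\<subseteq>Y. infinite Y' \<and> Q s Y')" using den by blast
    ultimately obtain Y' where "Y' \<subseteq> R' \<inter> {Inf R'<..}" "infinite Y'" "\<forall>s\<in>Pow {..Inf R'}. Q s Y'"
      using fusion_fin[of Q, OF h1 h2, of "Pow {..Inf R'}" "R' \<inter> {Inf R'<..}"] by blast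
    then show ?thesis unfolding PS_def by blast
  qed
  have inv: "infinite (R k) \<and> R k \<subseteq> Y" for k
  proof (induction k)
    case 0 then show ?case using someI_ex[OF ex0] R0 unfolding P0_def by simp
  next
    case (Suc k)
    then have "PS (R k) (R (Suc k))" using someI_ex[OF exS] RS by metis
    then show ?case using Suc unfolding PS_def by blast
  qed
  have PSk: "PS (R k) (R (Suc k))" for k using inv someI_ex[OF exS] RS by metis
  have P0R: "P0 (R 0)" using someI_ex[OF ex0] R0 by simp
  define m where "m = (\<lambda>k. Inf (R k))"
  have mR: "m k \<in> R k" for k using inv[of k] m_def wellorder_InfI
    by (metis infinite_imp_nonempty ex_in_conv)
  have Rdec: "R (Suc k) \<subseteq> R k" for k using PSk[of k] unfolding PS_def by blast
  have Rmono: "j \<le> k \<Longrightarrow> R k \<subseteq> R j" for j k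
    by (induction k rule: dec_induct) (use Rdec in auto)
  have msuc: "m k < m (Suc k)" for k using PSk[of k] mR[of "Suc k"] unfolding PS_def m_def by auto
  then have smono: "strict_mono m" by (simp add: strict_mono_Suc_iff)
  define Z where "Z = range m"
  have ZY: "Z \<subseteq> Y" using mR inv Z_def by blast
  have Zinf: "infinite Z" using smono Z_def strict_mono_imp_inj_on
    by (metis finite_imageD infinite_UNIV_nat)
  have "Q s (Z \<inter> gt s)" if s: "finite s" "s \<subseteq> Z" for s
  proof (cases "s = {}")
    case True
    have "Z \<subseteq> R 0" using Z_def mR Rmono by blast
    moreover have "Q {} (R 0)" using P0R unfolding P0_def by blast
    ultimately have "Q {} Z" using her[of "{}" "R 0" Z] Zinf by blast
    then show ?thesis using True by simp
  next
    case False
    then have "Max s \<in> Z" using s Max_in by blast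
    then obtain k where k: "Max s = m k" using Z_def by blast
    have "s \<subseteq> {..Inf (R k)}"
    proof
      fix x assume "x \<in> s"
      then have "x \<le> Max s" using s by simp
      then show "x \<in> {..Inf (R k)}" using k m_def by simp
    qed
    then have q: "Q s (R (Suc k))" using PSk[of k] unfolding PS_def by blast
    have sub: "Z \<inter> gt s \<subseteq> R (Suc k)"
    proof
      fix x assume x: "x \<in> Z \<inter> gt s"
      then obtain j where j: "x = m j" using Z_def by blast
      have "Max s < x" using x s False Max_in unfolding gt_def by blast
      then have "k < j" using j k smono by (metis not_less_iff_gr_or_eq strict_mono_less)
      then show "x \<in> R (Suc k)" using j mR Rmono by (metis Suc_leI subsetD)
    qed
    show ?thesis using her[OF q sub] infinite_gt[OF Zinf s(1)] by blast
  qed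
  then show ?thesis using ZY Zinf by blast
qed

definition acc :: "nat set set \<Rightarrow> nat set \<Rightarrow> nat set \<Rightarrow> bool" where
  "acc F s Y \<longleftrightarrow> (\<forall>X\<subseteq>Y. infinite X \<longrightarrow> (\<exists>u\<in>F. iseg u (s \<union> X)))"

definition rej :: "nat set set \<Rightarrow> nat set \<Rightarrow> nat set \<Rightarrow> bool" where
  "rej F s Y \<longleftrightarrow> (\<forall>Y'\<subseteq>Y. infinite Y' \<longrightarrow> \<not> acc F s Y')"

lemma acc_her: "acc F s Y \<Longrightarrow> Y' \<subseteq> Y \<Longrightarrow> acc F s Y'"
  unfolding acc_def by blast

lemma rej_her: "rej F s Y \<Longrightarrow> Y' \<subseteq> Y \<Longrightarrow> rej F s Y'"
  unfolding rej_def by blast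

lemma cofin_rej:
  assumes dec: "\<forall>s. finite s \<and> s \<subseteq> Z \<longrightarrow> acc F s (Z \<inter> gt s) \<or> rej F s (Z \<inter> gt s)"
    and s: "finite s" "s \<subseteq> Z" and r: "rej F s (Z \<inter> gt s)"
  shows "finite {n \<in> Z \<inter> gt s. acc F (insert n s) (Z \<inter> gt (insert n s))}"
proof (rule ccontr)
  define N where "N = {n \<in> Z \<inter> gt s. acc F (insert n s) (Z \<inter> gt (insert n s))}"
  assume "infinite {n \<in> Z \<inter> gt s. acc F (insert n s) (Z \<inter> gt (insert n s))}"
  then have Ninf: "infinite N" using N_def by simp
  have "acc F s N" unfolding acc_def
  proof (intro allI impI)
    fix X assume X: "X \<subseteq> N" "infinite X"
    define n where "n = Inf X"
    have nX: "n \<in> X" using X n_def wellorder_InfI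
      by (metis infinite_imp_nonempty ex_in_conv)
    have nmin: "\<forall>x\<in>X. n \<le> x" using n_def wellorder_Inf_le1 by blast
    define X' where "X' = X - {n}"
    have nN: "n \<in> N" using nX X by blast
    have "acc F (insert n s) (Z \<inter> gt (insert n s))" using nN N_def by blast
    moreover have "X' \<subseteq> Z \<inter> gt (insert n s)"
    proof
      fix x assume x: "x \<in> X'"
      then have "x \<in> N" "n < x" using X X'_def nmin by auto
      then show "x \<in> Z \<inter> gt (insert n s)" using N_def unfolding gt_def by auto
    qed
    moreover have "infinite X'" using X X'_def by simp
    ultimately obtain u where "u \<in> F" "iseg u (insert n s \<union> X')" unfolding acc_def by blast
    moreover have "insert n s \<union> X' = s \<union> X" using nX X'_def by auto
    ultimately show "\<exists>u\<in>F. iseg u (s \<union> X)" by auto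
  qed
  moreover have "N \<subseteq> Z \<inter> gt s" using N_def by blast
  ultimately show False using r Ninf unfolding rej_def by blast
qed

theorem open_ramsey:
  assumes Fin: "\<forall>u\<in>F. finite u" and Y: "infinite Y"
  shows "\<exists>Y'\<subseteq>Y. infinite Y' \<and> ((\<forall>u\<in>F. \<not> u \<subseteq> Y') \<or> (\<forall>X\<subseteq>Y'. infinite X \<longrightarrow> (\<exists>u\<in>F. iseg u X)))"
proof -
  define Q where "Q = (\<lambda>s Y. acc F s Y \<or> rej F s Y)"
  have her: "\<And>s Y Y'. Q s Y \<Longrightarrow> Y' \<subseteq> Y \<Longrightarrow> infinite Y' \<Longrightarrow> Q s Y'"
    unfolding Q_def using acc_her rej_her by blast
  have den: "\<exists>Y'\<subseteq>Y0. infinite Y' \<and> Q s Y'" if "finite s" "infinite Y0" for s Y0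
  proof (cases "rej F s Y0")
    case True then show ?thesis using that unfolding Q_def by blast
  next
    case False
    then obtain Y' where "Y' \<subseteq> Y0" "infinite Y'" "acc F s Y'" unfolding rej_def by blast
    then show ?thesis unfolding Q_def by blast
  qed
  have ex: "\<exists>Z\<subseteq>Y. infinite Z \<and> (\<forall>s. finite s \<and> s \<subseteq> Z \<longrightarrow> Q s (Z \<inter> gt s))"
    by (rule fusion[of Q Y, OF her den Y])
  then obtain Z where ZZ: "Z \<subseteq> Y \<and> infinite Z \<and> (\<forall>s. finite s \<and> s \<subseteq> Z \<longrightarrow> Q s (Z \<inter> gt s))"
    by (elim exE)
  have Z: "Z \<subseteq> Y" "infinite Z" using ZZ by auto
  have dec: "\<forall>s. finite s \<and> s \<subseteq> Z \<longrightarrow> Q s (Z \<inter> gt s)" using ZZ by blast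
  show ?thesis
  proof (cases "acc F {} Z")
    case True
    have "\<forall>X\<subseteq>Z. infinite X \<longrightarrow> (\<exists>u\<in>F. iseg u X)"
    proof (intro allI impI)
      fix X assume "X \<subseteq> Z" "infinite X"
      then obtain u where "u \<in> F" "iseg u ({} \<union> X)" using True unfolding acc_def by blast
      then show "\<exists>u\<in>F. iseg u X" by auto
    qed
    then show ?thesis using Z by blast
  next
    case False
    have "Q {} (Z \<inter> gt {})" using dec by blast
    then have r0: "rej F {} Z" using False unfolding Q_def by simp
    define good where "good = (\<lambda>A n. n \<in> Z \<and> (\<forall>a\<in>A. a < n) \<and>
        (\<forall>s\<subseteq>A. rej F (insert n s) (Z \<inter> gt (insert n s))))"
    define nx where "nx = (\<lambda>A. SOME n. good A n)"
    define A where "A = rec_nat {} (\<lambda>k Ak. insert (nx Ak) Ak)"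
    have A0: "A 0 = {}" unfolding A_def by simp
    have AS: "A (Suc k) = insert (nx (A k)) (A k)" for k unfolding A_def by simp
    have ex: "\<exists>n. good B n" if B: "finite B" "B \<subseteq> Z" "\<forall>s\<subseteq>B. rej F s (Z \<inter> gt s)" for B
    proof -
      define bad where "bad = (\<Union>s\<in>Pow B. {n \<in> Z \<inter> gt s. acc F (insert n s) (Z \<inter> gt (insert n s))})"
      have "finite bad" unfolding bad_def
      proof (rule finite_UN_I)
        show "finite (Pow B)" using B by simp
        fix s assume "s \<in> Pow B"
        then have "finite s" "s \<subseteq> Z" "rej F s (Z \<inter> gt s)" using B finite_subset by auto
        then show "finite {n \<in> Z \<inter> gt s. acc F (insert n s) (Z \<inter> gt (insert n s))}"
          using cofin_rej[of Z F s] dec unfolding Q_def by blast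
      qed
      then have "infinite (Z \<inter> gt B - bad)" using infinite_gt[OF Z(2) B(1)] by simp
      then obtain n where n: "n \<in> Z \<inter> gt B" "n \<notin> bad" using infinite_imp_nonempty by blast
      have "\<forall>s\<subseteq>B. rej F (insert n s) (Z \<inter> gt (insert n s))"
      proof (intro allI impI)
        fix s assume sB: "s \<subseteq> B"
        then have fs: "finite s" using B finite_subset by blast
        have ngs: "n \<in> Z \<inter> gt s" using n sB unfolding gt_def by blast
        then have "\<not> acc F (insert n s) (Z \<inter> gt (insert n s))" using n sB unfolding bad_def by blast
        moreover have "Q (insert n s) (Z \<inter> gt (insert n s))" using dec fs sB B n by auto
        ultimately show "rej F (insert n s) (Z \<inter> gt (insert n s))" unfolding Q_def by blast
      qed
      then show ?thesis using n unfolding good_def gt_def by blast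
    qed
    have inv: "finite (A k) \<and> A k \<subseteq> Z \<and> (\<forall>s\<subseteq>A k. rej F s (Z \<inter> gt s))" for k
    proof (induction k)
      case 0 then show ?case using A0 r0 by simp
    next
      case (Suc k)
      then have g: "good (A k) (nx (A k))" using ex[of "A k"] nx_def someI_ex by metis
      have "\<forall>s\<subseteq>A (Suc k). rej F s (Z \<inter> gt s)"
      proof (intro allI impI)
        fix s assume s: "s \<subseteq> A (Suc k)"
        show "rej F s (Z \<inter> gt s)"
        proof (cases "nx (A k) \<in> s")
          case True
          then have "s = insert (nx (A k)) (s - {nx (A k)})" by blast
          moreover have "s - {nx (A k)} \<subseteq> A k" using s AS by auto
          ultimately show ?thesis using g unfolding good_def by metis
        next
          case False
          then show ?thesis using s AS Suc by auto
        qed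
      qed
      then show ?case using Suc g AS unfolding good_def by auto
    qed
    have gA: "good (A k) (nx (A k))" for k using inv ex nx_def someI_ex by metis
    define W where "W = (\<Union>k. A k)"
    have Amono: "j \<le> k \<Longrightarrow> A j \<subseteq> A k" for j k
      by (induction k rule: dec_induct) (auto simp: AS)
    have WZ: "W \<subseteq> Z" using inv W_def by blast
    have cardA: "card (A k) = k" for k
    proof (induction k)
      case 0 then show ?case using A0 by simp
    next
      case (Suc k)
      have "nx (A k) \<notin> A k" using gA[of k] unfolding good_def by blast
      then show ?case using Suc AS inv by simp
    qed
    have Winf: "infinite W"
    proof
      assume "finite W"
      then have "card (A (Suc (card W))) \<le> card W" using W_def by (meson UN_I UNIV_I card_mono subsetI)
      then show False using cardA by simp
    qed
    have fin_in: "\<exists>k. s \<subseteq> A k" if "finite s" "s \<subseteq> W" for s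
      using that
    proof (induction s rule: finite_induct)
      case empty then show ?case by blast
    next
      case (insert x s)
      then obtain k where k: "s \<subseteq> A k" by blast
      obtain j where j: "x \<in> A j" using insert W_def by blast
      have "insert x s \<subseteq> A (max j k)" using k j Amono
        by (metis insert_subset max.cobounded1 max.cobounded2 subset_iff)
      then show ?case by blast
    qed
    have "\<forall>u\<in>F. \<not> u \<subseteq> W"
    proof (intro ballI notI)
      fix u assume u: "u \<in> F" "u \<subseteq> W"
      then have fu: "finite u" using Fin by blast
      then obtain k where "u \<subseteq> A k" using fin_in u by blast
      then have r: "rej F u (Z \<inter> gt u)" using inv by blast
      have "acc F u (Z \<inter> gt u)" unfolding acc_def
      proof (intro allI impI)
        fix X assume "X \<subseteq> Z \<inter> gt u" "infinite X"
        then have "iseg u (u \<union> X)" using iseg_union_gt_self[OF fu] by blast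
        then show "\<exists>u'\<in>F. iseg u' (u \<union> X)" using u by blast
      qed
      then show False using r infinite_gt[OF Z(2) fu] unfolding rej_def by blast
    qed
    then show ?thesis using WZ Z Winf by blast
  qed
qed




lemma wqo_good:
  fixes q :: "nat \<Rightarrow> 'a"
  assumes w: "wqo_on P le" and q: "\<forall>i. q i \<in> P"
  shows "\<exists>i j. i < j \<and> le (q i) (q j)"
proof (rule ccontr)
  assume nb: "\<not> (\<exists>i j. i < j \<and> le (q i) (q j))"
  have refl: "\<forall>x\<in>P. le x x" using w unfolding wqo_on_def quasi_order_on_def by blast
  define col where "col = (\<lambda>e::nat set. if le (q (Min e)) (q (Max e)) then 0::nat
      else if le (q (Max e)) (q (Min e)) then 1 else 2)"
  have "\<forall>x\<in>(UNIV::nat set). \<forall>y\<in>UNIV. x \<noteq> y \<longrightarrow> col {x, y} < 3" unfolding col_def by auto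
  then obtain Y t where Y: "Y \<subseteq> UNIV" "infinite Y" "t < 3"
    and hom: "\<forall>x\<in>Y. \<forall>y\<in>Y. x \<noteq> y \<longrightarrow> col {x, y} = t"
    using Ramsey2[of "UNIV::nat set" col 3] by auto
  have colxy: "col {x, y} = (if le (q x) (q y) then 0 else if le (q y) (q x) then 1 else 2)"
    if "x < y" for x y
  proof -
    have "Min {x, y} = x" "Max {x, y} = y" using that by auto
    then show ?thesis unfolding col_def by simp
  qed
  define e where "e = enumerate Y"
  have sm: "strict_mono e" using Y strict_mono_enumerate e_def by blast
  have eY: "e k \<in> Y" for k using Y enumerate_in_set e_def by blast
  have ct: "col {e i, e j} = t" if "i < j" for i j
    using hom eY sm that by (metis strict_mono_less less_irrefl)
  consider "t = 0" | "t = 1" | "t = 2" using Y by linarith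
  then show False
  proof cases
    case 1
    have "col {e 0, e 1} = 0" using ct[of 0 1] 1 by simp
    then have "le (q (e 0)) (q (e 1))" using colxy[of "e 0" "e 1"] sm
      by (metis one_neq_zero strict_mono_less zero_less_one zero_neq_numeral)
    moreover have "e 0 < e 1" using sm by (simp add: strict_mono_less)
    ultimately show False using nb by blast
  next
    case 2
    define g where "g = (\<lambda>k. q (e k))"
    have "\<forall>k. g k \<in> P \<and> le (g (Suc k)) (g k) \<and> \<not> le (g k) (g (Suc k))"
    proof
      fix k
      have lt: "e k < e (Suc k)" using sm by (simp add: strict_mono_less)
      have c1: "col {e k, e (Suc k)} = 1" using ct[of k "Suc k"] 2 by simp
      have n1: "\<not> le (q (e k)) (q (e (Suc k)))"
      proof
        assume "le (q (e k)) (q (e (Suc k)))"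
        then have "col {e k, e (Suc k)} = 0" using colxy[OF lt] by simp
        then show False using c1 by simp
      qed
      have n2: "le (q (e (Suc k))) (q (e k))"
      proof (rule ccontr)
        assume "\<not> le (q (e (Suc k))) (q (e k))"
        then have "col {e k, e (Suc k)} = 2" using colxy[OF lt] n1 by simp
        then show False using c1 by simp
      qed
      show "g k \<in> P \<and> le (g (Suc k)) (g k) \<and> \<not> le (g k) (g (Suc k))"
        using n1 n2 q unfolding g_def by blast
    qed
    then show False using w unfolding wqo_on_def by blast
  next
    case 3
    define A where "A = q ` Y"
    have inc: "\<not> le (q x) (q y)" if "x \<in> Y" "y \<in> Y" "x \<noteq> y" for x y
    proof (cases "x < y")
      case True
      then have c2: "col {x, y} = 2" using hom that 3 by simp
      show ?thesis
      proof
        assume "le (q x) (q y)"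
        then have "col {x, y} = 0" using colxy[OF True] by simp
        then show False using c2 by simp
      qed
    next
      case False
      then have lt: "y < x" using that by simp
      have c2: "col {y, x} = 2" using hom that 3 by simp
      show ?thesis
      proof
        assume a: "le (q x) (q y)"
        show False
        proof (cases "le (q y) (q x)")
          case True
          then have "col {y, x} = 0" using colxy[OF lt] by simp
          then show False using c2 by simp
        next
          case False
          then have "col {y, x} = 1" using colxy[OF lt] a by simp
          then show False using c2 by simp
        qed
      qed
    qed
    have injq: "inj_on q Y"
    proof (rule inj_onI)
      fix x y assume "x \<in> Y" "y \<in> Y" "q x = q y"
      then show "x = y" using inc refl q by metis
    qed
    have "infinite A" using injq Y A_def finite_imageD by blast
    moreover have "A \<subseteq> P" using q A_def by blast
    moreover have "\<forall>x\<in>A. \<forall>y\<in>A. x \<noteq> y \<longrightarrow> \<not> le x y" using inc A_def by blast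
    ultimately show False using w unfolding wqo_on_def by blast
  qed
qed

lemma downset_min:
  fixes Dv :: "nat set \<Rightarrow> 'a set"
  assumes w: "wqo_on P le" and ne: "I \<noteq> {}"
    and ds: "\<forall>Y\<in>I. Dv Y \<subseteq> P \<and> (\<forall>x\<in>P. \<forall>y\<in>Dv Y. le x y \<longrightarrow> x \<in> Dv Y)"
  shows "\<exists>Y0\<in>I. \<forall>Y\<in>I. Dv Y \<subseteq> Dv Y0 \<longrightarrow> Dv Y = Dv Y0"
proof -
  define DS where "DS = Dv ` I"
  define r where "r = {(A, B). A \<subset> B \<and> A \<in> DS \<and> B \<in> DS}"
  have "wf r"
  proof (unfold wf_iff_no_infinite_down_chain, rule notI)
    assume "\<exists>f. \<forall>i. (f (Suc i), f i) \<in> r"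
    then obtain f where f: "\<forall>i. (f (Suc i), f i) \<in> r" by blast
    have fd: "f (Suc i) \<subset> f i" "f i \<in> DS" for i using f r_def by auto
    have fmono: "j \<le> k \<Longrightarrow> f k \<subseteq> f j" for j k
      by (induction k rule: dec_induct) (use fd in auto)
    have "\<forall>i. \<exists>x. x \<in> f i - f (Suc i)" using fd by blast
    then obtain x where x: "\<forall>i. x i \<in> f i - f (Suc i)" by metis
    have xP: "\<forall>i. x i \<in> P" using x fd ds DS_def by blast
    obtain i j where ij: "i < j" "le (x i) (x j)" using wqo_good[OF w xP] by blast
    have "x j \<in> f (Suc i)" using x fmono[of "Suc i" j] ij by auto
    moreover have "f (Suc i) \<in> DS" using fd by blast
    ultimately have "x i \<in> f (Suc i)" using ds DS_def ij xP by blast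
    then show False using x by blast
  qed
  have "Dv (SOME Y. Y \<in> I) \<in> DS" using ne DS_def by (simp add: some_in_eq)
  then obtain A0 where A0: "A0 \<in> DS" "\<forall>A. (A, A0) \<in> r \<longrightarrow> A \<notin> DS"
    using wfE_min[OF \<open>wf r\<close>] by metis
  then obtain Y0 where "Y0 \<in> I" "A0 = Dv Y0" using DS_def by blast
  moreover have "\<forall>Y\<in>I. Dv Y \<subseteq> Dv Y0 \<longrightarrow> Dv Y = Dv Y0"
    using A0 calculation r_def DS_def by blast
  ultimately show ?thesis by blast
qed

abbreviation lx :: "(nat list \<times> nat list) set" where "lx \<equiv> lexord {(x, y). x < y}"

lemma set_take_iseg:
  fixes xs :: "nat list"
  shows "sorted_wrt (<) xs \<Longrightarrow> x \<in> set xs \<Longrightarrow> y \<in> set (take m xs) \<Longrightarrow> x < y \<Longrightarrow> x \<in> set (take m xs)"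
proof (induction xs arbitrary: m)
  case Nil then show ?case by simp
next
  case (Cons z zs)
  show ?case
  proof (cases m)
    case 0 then show ?thesis using Cons by simp
  next
    case (Suc m')
    have tk: "take m (z # zs) = z # take m' zs" using Suc by simp
    show ?thesis
    proof (cases "x = z")
      case True then show ?thesis using tk by simp
    next
      case False
      then have xzs: "x \<in> set zs" using Cons by simp
      have zx: "z < x" using Cons.prems(1) xzs by simp
      have "y \<noteq> z" using zx Cons.prems(4) by simp
      then have "y \<in> set (take m' zs)" using Cons.prems(3) tk by simp
      then have "x \<in> set (take m' zs)" using Cons.IH[of m'] Cons.prems xzs by simp
      then show ?thesis using tk by simp
    qed
  qed
qed

lemma enum_inj: "finite s \<Longrightarrow> finite t \<Longrightarrow> enum s = enum t \<Longrightarrow> s = t"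
  by (metis sorted_list_of_set.set_sorted_key_list_of_set)

lemma barrier_lex_wf:
  assumes B: "barrier B"
  shows "wf (barrier_lex B - Id)"
proof (unfold wf_iff_no_infinite_down_chain, rule notI)
  assume "\<exists>f. \<forall>i. (f (Suc i), f i) \<in> barrier_lex B - Id"
  then obtain f where f: "\<forall>i. (f (Suc i), f i) \<in> barrier_lex B - Id" by blast
  have fB: "f i \<in> B" for i using f[rule_format, of i] unfolding barrier_lex_def by auto
  have fne: "f (Suc i) \<noteq> f i" for i using f by auto
  have fin: "finite (f i)" for i using fB B unfolding barrier_def by blast
  define L where "L = (\<lambda>i. enum (f i))"
  have Lset: "set (L i) = f i" for i using fin L_def by simp
  have Lsort: "sorted_wrt (<) (L i)" for i using fin L_def by simp
  have Llex: "(L (Suc i), L i) \<in> lx" for i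
    using f[rule_format, of i] fne[of i] unfolding barrier_lex_def L_def by auto
  have anti: "\<not> f i \<subset> f j" for i j using fB B unfolding barrier_def by blast
  have stab: "\<exists>N. \<forall>i\<ge>N. take k (L i) = take k (L N) \<and> k \<le> length (L i)" for k
  proof (induction k)
    case 0 then show ?case by simp
  next
    case (Suc k)
    then obtain N where N: "\<forall>i\<ge>N. take k (L i) = take k (L N) \<and> k \<le> length (L i)" by blast
    define p where "p = take k (L N)"
    have Np: "take k (L i) = p" if "i \<ge> N" for i using N that p_def by blast
    have Nl: "k \<le> length (L i)" if "i \<ge> N" for i using N that by blast
    have len: "k < length (L i)" if "i \<ge> N" for i
    proof (rule ccontr)
      assume "\<not> k < length (L i)"
      then have "length (L i) = k" using Nl[OF that] by linarith
      then have Li: "L i = p" using Np[OF that] by (metis take_all order_refl)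
      have "take k (L (Suc i)) = p" using Np that by simp
      then have "set p \<subseteq> set (L (Suc i))" by (metis set_take_subset)
      then have "f i \<subseteq> f (Suc i)" using Li Lset by metis
      then show False using anti[of i "Suc i"] fne[of i] by blast
    qed
    define e where "e = (\<lambda>i. L i ! k)"
    have dec: "e (Suc i) \<le> e i" if "i \<ge> N" for i
    proof -
      have l1: "k < length (L i)" "k < length (L (Suc i))" using len that by auto
      have d1: "L i = p @ e i # drop (Suc k) (L i)"
        using id_take_nth_drop[OF l1(1)] Np[OF that] e_def by simp
      have "Suc i \<ge> N" using that by simp
      then have d2: "L (Suc i) = p @ e (Suc i) # drop (Suc k) (L (Suc i))"
        using id_take_nth_drop[OF l1(2)] Np e_def by simp
      have "(p @ e (Suc i) # drop (Suc k) (L (Suc i)), p @ e i # drop (Suc k) (L i)) \<in> lx"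
        using Llex[of i] d1 d2 by metis
      then have "(e (Suc i) # drop (Suc k) (L (Suc i)), e i # drop (Suc k) (L i)) \<in> lx"
        by (simp add: lexord_same_pref_iff)
      then show ?thesis by (auto simp: lexord_cons_cons)
    qed
    define v where "v = Inf (e ` {N..})"
    have "v \<in> e ` {N..}" unfolding v_def by (rule wellorder_InfI) blast
    then obtain M where M: "M \<ge> N" "e M = v" by auto
    have vle: "v \<le> e i" if "i \<ge> N" for i unfolding v_def using that by (simp add: wellorder_Inf_le1)
    have decm: "e i \<le> e M" if "i \<ge> M" for i
      using that by (induction i rule: dec_induct) (use dec M in \<open>auto intro: order_trans\<close>)
    have econst: "e i = e M" if "i \<ge> M" for i using decm[OF that] vle[of i] M that by auto
    have "\<forall>i\<ge>M. take (Suc k) (L i) = take (Suc k) (L M) \<and> Suc k \<le> length (L i)"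
    proof (intro allI impI)
      fix i assume iM: "i \<ge> M"
      have iN: "i \<ge> N" using iM M by simp
      have "take (Suc k) (L i) = take k (L i) @ [e i]"
        using len[OF iN] e_def by (simp add: take_Suc_conv_app_nth)
      moreover have "take (Suc k) (L M) = take k (L M) @ [e M]"
        using len[OF M(1)] e_def by (simp add: take_Suc_conv_app_nth)
      moreover have "take k (L i) = take k (L M)" using Np iN M(1) by metis
      ultimately show "take (Suc k) (L i) = take (Suc k) (L M) \<and> Suc k \<le> length (L i)"
        using econst[OF iM] len[OF iN] by simp
    qed
    then show ?case by blast
  qed
  have "\<exists>N. \<forall>k. \<forall>i\<ge>N k. take k (L i) = take k (L (N k)) \<and> k \<le> length (L i)"
    by (rule choice) (use stab in blast)
  then obtain N where N0: "\<forall>k. \<forall>i\<ge>N k. take k (L i) = take k (L (N k)) \<and> k \<le> length (L i)"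
    by (elim exE)
  have N: "take k (L i) = take k (L (N k)) \<and> k \<le> length (L i)" if "i \<ge> N k" for k i
    using N0 that by blast
  define pre where "pre = (\<lambda>m. take m (L (N m)))"
  have pre_i: "take m (L i) = pre m" if "i \<ge> N m" for m i using N[OF that] pre_def by simp
  define X where "X = (\<Union>m. set (pre m))"
  have Xi: "\<exists>i. x \<in> set (L i) \<and> take m (L i) = pre m" if xX: "x \<in> X" for x m
  proof -
    obtain m' where "x \<in> set (pre m')" using xX X_def by blast
    define i where "i = max (N m) (N m')"
    have "take m' (L i) = pre m'" "take m (L i) = pre m" using pre_i i_def by auto
    then show ?thesis using \<open>x \<in> set (pre m')\<close> by (metis in_set_takeD)
  qed
  have preX: "iseg (set (pre m)) X" for m
    unfolding init_seg_of_set_def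
  proof (intro conjI ballI impI)
    show "finite (set (pre m))" by simp
    show "set (pre m) \<subseteq> X" using X_def by blast
    fix x y assume xy: "x \<in> X" "y \<in> set (pre m)" "x < y"
    obtain i where i: "x \<in> set (L i)" "take m (L i) = pre m" using Xi[OF xy(1)] by blast
    show "x \<in> set (pre m)" using set_take_iseg[OF Lsort i(1), of y m] i(2) xy by simp
  qed
  have card_pre: "card (set (pre m)) = m" for m
  proof -
    have "m \<le> length (L (N m))" using N[of m "N m"] by simp
    then have "length (pre m) = m" using pre_def by simp
    moreover have "distinct (pre m)" using Lsort[of "N m"] unfolding pre_def
      by (simp add: strict_sorted_iff distinct_take)
    ultimately show ?thesis by (simp add: distinct_card)
  qed
  have XB: "X \<subseteq> \<Union>B"
  proof
    fix x assume "x \<in> X"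
    then obtain i where "x \<in> set (L i)" using Xi by blast
    then show "x \<in> \<Union>B" using Lset fB by blast
  qed
  have Xinf: "infinite X"
  proof
    assume fX: "finite X"
    have "set (pre (Suc (card X))) \<subseteq> X" using X_def by blast
    then have "card (set (pre (Suc (card X)))) \<le> card X" using fX card_mono by blast
    then show False using card_pre by simp
  qed
  obtain u where u: "u \<in> B" "u \<noteq> {}" "iseg u X" using B XB Xinf unfolding barrier_def by blast
  define m where "m = Suc (card u)"
  have "iseg u (set (pre m)) \<or> iseg (set (pre m)) u" using iseg_cmp[OF u(3) preX[of m]] .
  moreover have "\<not> iseg (set (pre m)) u"
  proof
    assume "iseg (set (pre m)) u"
    then have "card (set (pre m)) \<le> card u" using iseg_subset iseg_finite u(3) card_mono by blast
    then show False using card_pre m_def by simp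
  qed
  ultimately have us: "u \<subseteq> set (pre m)" using iseg_subset by blast
  have "u \<noteq> set (pre m)" using card_pre m_def by (metis n_not_Suc_n)
  then have "u \<subset> set (pre m)" using us by blast
  moreover have "set (pre m) \<subseteq> f (N m)" using pre_def Lset by (metis set_take_subset)
  ultimately have "u \<subset> f (N m)" by blast
  then show False using u(1) fB B unfolding barrier_def by blast
qed

lemma barrier_lex_Well_order:
  assumes B: "barrier B"
  shows "Well_order (barrier_lex B)"
proof -
  define R where "R = barrier_lex B"
  have fin: "\<forall>s\<in>B. finite s" using B unfolding barrier_def by blast
  have FR: "Field R = B"
  proof
    show "Field R \<subseteq> B" unfolding R_def barrier_lex_def Field_def by auto
    show "B \<subseteq> Field R" unfolding R_def barrier_lex_def Field_def by auto
  qed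
  have trl: "trans {(x::nat, y). x < y}" by (auto simp: trans_def)
  have irr: "\<forall>x. (x, x) \<notin> {(x::nat, y). x < y}" by simp
  have refl: "refl_on B R" unfolding refl_on_def R_def barrier_lex_def by auto
  have trans: "trans R"
    unfolding trans_def R_def barrier_lex_def using lexord_trans[OF _ _ trl] by blast
  have antisym: "antisym R"
    unfolding antisym_def R_def barrier_lex_def
    using lexord_trans[OF _ _ trl] lexord_irreflexive[OF irr] by blast
  have total: "total_on B R"
    unfolding total_on_def R_def barrier_lex_def
  proof (intro ballI impI)
    fix s t assume st: "s \<in> B" "t \<in> B" "s \<noteq> t"
    then have "enum s \<noteq> enum t" using fin enum_inj by blast
    then show "(s, t) \<in> {(s, t). s \<in> B \<and> t \<in> B \<and> (s = t \<or> (enum s, enum t) \<in> lx)} \<or>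
           (t, s) \<in> {(s, t). s \<in> B \<and> t \<in> B \<and> (s = t \<or> (enum s, enum t) \<in> lx)}"
    proof -
      have lin: "\<forall>a b. (a, b) \<in> {(x::nat, y). x < y} \<or> a = b \<or> (b, a) \<in> {(x::nat, y). x < y}"
        by auto
      have "(enum s, enum t) \<in> lx \<or> enum s = enum t \<or> (enum t, enum s) \<in> lx"
        using lexord_linear[OF lin] by blast
      then show ?thesis using st \<open>enum s \<noteq> enum t\<close> by blast
    qed
  qed
  have sub: "R \<subseteq> B \<times> B" unfolding R_def barrier_lex_def by auto
  have "wf (R - Id)" using barrier_lex_wf[OF B] R_def by simp
  then show ?thesis using refl trans antisym total FR R_def sub
    unfolding well_order_on_def linear_order_on_def partial_order_on_def preorder_on_def
    by simp
qed

lemma exists_alpha: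
  assumes B: "barrier B"
  shows "\<exists>\<alpha>::nat rel. countable_ordinal \<alpha> \<and> (barrier_lex B, \<alpha>) \<in> ordLeq"
proof -
  define R where "R = barrier_lex B"
  have W: "Well_order R" using barrier_lex_Well_order[OF B] R_def by simp
  have fin: "\<forall>s\<in>B. finite s" using B unfolding barrier_def by blast
  have FR: "Field R \<subseteq> Collect finite" using fin unfolding R_def barrier_lex_def Field_def by auto
  define g where "g = to_nat_on (Collect finite :: nat set set)"
  have inj: "inj_on g (Field R)" using inj_on_to_nat_on[OF countable_Collect_finite] FR g_def
    by (metis inj_on_subset)
  define \<alpha> where "\<alpha> = dir_image R g"
  have iso: "(R, \<alpha>) \<in> ordIso" using dir_image_ordIso[OF W inj] \<alpha>_def by simp
  have "Well_order \<alpha>" using Well_order_dir_image[OF W inj] \<alpha>_def by simp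
  moreover have "countable (Field \<alpha>)" using dir_image_Field \<alpha>_def by simp
  moreover have "(R, \<alpha>) \<in> ordLeq" using iso ordIso_iff_ordLeq by blast
  ultimately show ?thesis unfolding countable_ordinal_def R_def by blast
qed

lemma apply_bqo:
  assumes H: "bqo_on Q (\<subseteq>)" and B: "barrier B" and g: "g ` B \<subseteq> Q"
  shows "\<exists>s\<in>B. \<exists>t\<in>B. s \<lhd>\<^sub>B t \<and> g s \<subseteq> g t"
proof -
  obtain \<alpha> :: "nat rel" where a: "countable_ordinal \<alpha>" "(barrier_lex B, \<alpha>) \<in> ordLeq"
    using exists_alpha[OF B] by blast
  have "alpha_bqo_on \<alpha> Q (\<subseteq>)" using H a unfolding bqo_on_def by blast
  then have "good_map B (\<subseteq>) g" using B a g unfolding alpha_bqo_on_def by blast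
  then show ?thesis unfolding good_map_def by blast
qed




locale bqoctx =
  fixes P :: "'a set" and le :: "'a \<Rightarrow> 'a \<Rightarrow> bool"
  assumes po: "poset_on P le" and w: "wqo_on P le"
    and H: "bqo_on (nonprincipal_ideals P le) (\<subseteq>)"
begin

lemma refl: "x \<in> P \<Longrightarrow> le x x"
  using po unfolding poset_on_def quasi_order_on_def by blast

lemma trans: "x \<in> P \<Longrightarrow> y \<in> P \<Longrightarrow> z \<in> P \<Longrightarrow> le x y \<Longrightarrow> le y z \<Longrightarrow> le x z"
  using po unfolding poset_on_def quasi_order_on_def by blast

lemma antisym: "x \<in> P \<Longrightarrow> y \<in> P \<Longrightarrow> le x y \<Longrightarrow> le y x \<Longrightarrow> x = y"
  using po unfolding poset_on_def by blast

definition config :: "nat set set \<Rightarrow> nat set \<Rightarrow> (nat set \<Rightarrow> 'a) \<Rightarrow> bool" where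
  "config C Z h \<longleftrightarrow> infinite Z \<and> (\<forall>s\<in>C. finite s \<and> s \<subseteq> Z) \<and> (\<forall>s\<in>C. \<forall>t\<in>C. \<not> s \<subset> t) \<and>
     (\<forall>X\<subseteq>Z. infinite X \<longrightarrow> (\<exists>s\<in>C. iseg s X)) \<and> (\<forall>s\<in>C. h s \<in> P) \<and>
     (\<forall>s\<in>C. \<forall>t\<in>C. s \<lhd>\<^sub>B t \<longrightarrow> \<not> le (h s) (h t))"

lemma configD:
  assumes "config C Z h"
  shows "infinite Z" "\<And>s. s \<in> C \<Longrightarrow> finite s" "\<And>s. s \<in> C \<Longrightarrow> s \<subseteq> Z"
    "\<And>s t. s \<in> C \<Longrightarrow> t \<in> C \<Longrightarrow> \<not> s \<subset> t"
    "\<And>X. X \<subseteq> Z \<Longrightarrow> infinite X \<Longrightarrow> \<exists>s\<in>C. iseg s X"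
    "\<And>s. s \<in> C \<Longrightarrow> h s \<in> P"
    "\<And>s t. s \<in> C \<Longrightarrow> t \<in> C \<Longrightarrow> s \<lhd>\<^sub>B t \<Longrightarrow> \<not> le (h s) (h t)"
  using assms unfolding config_def by blast+

lemma config_restrict:
  assumes c: "config C Z h" and Z': "Z' \<subseteq> Z" "infinite Z'"
  shows "config {s\<in>C. s \<subseteq> Z'} Z' h"
proof -
  have "\<forall>X\<subseteq>Z'. infinite X \<longrightarrow> (\<exists>s\<in>{s\<in>C. s \<subseteq> Z'}. iseg s X)"
  proof (intro allI impI)
    fix X assume X: "X \<subseteq> Z'" "infinite X"
    then obtain s where "s \<in> C" "iseg s X" using configD(5)[OF c, of X] Z' by blast
    then show "\<exists>s\<in>{s\<in>C. s \<subseteq> Z'}. iseg s X" using X iseg_subset by blast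
  qed
  then show ?thesis using c Z' unfolding config_def by blast
qed

lemma empty_shift: "{} \<lhd>\<^sub>B {}"
proof -
  have e: "\<exists>r. finite r \<and> iseg {} r \<and> {} \<noteq> r \<and> {} = r - {Min r}"
    by (rule exI[of _ "{0::nat}"]) (auto simp: iseg_empty)
  show ?thesis by (subst shift_rel_iff) (use e in simp)
qed

lemma config_nempty: "config C Z h \<Longrightarrow> {} \<notin> C"
  using configD(6,7) empty_shift refl by blast

lemma config_unique:
  assumes c: "config C Z h" and st: "s \<in> C" "t \<in> C" "iseg s X" "iseg t X"
  shows "s = t"
proof -
  have "iseg s t \<or> iseg t s" using iseg_cmp st by blast
  then have "s \<subseteq> t \<or> t \<subseteq> s" using iseg_subset by blast
  then show ?thesis using configD(4)[OF c] st by blast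
qed

lemma config_barrier:
  assumes c: "config C Z h"
  shows "barrier C"
proof -
  have ne: "{} \<notin> C" using config_nempty[OF c] .
  have cov: "\<forall>X. X \<subseteq> \<Union>C \<longrightarrow> infinite X \<longrightarrow> (\<exists>s\<in>C. s \<noteq> {} \<and> iseg s X)"
  proof (intro allI impI)
    fix X assume X: "X \<subseteq> \<Union>C" "infinite X"
    have "X \<subseteq> Z" using X configD(3)[OF c] by blast
    then obtain s where s: "s \<in> C" "iseg s X" using configD(5)[OF c] X by blast
    have "s \<noteq> {}" using ne s(1) by metis
    then show "\<exists>s\<in>C. s \<noteq> {} \<and> iseg s X" using s by (intro bexI[of _ s]) simp_all
  qed
  have "infinite C"
  proof
    assume fC: "finite C"
    then have fU: "finite (\<Union>C)" using configD(2)[OF c] by blast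
    define M where "M = Max (insert 0 (\<Union>C))"
    have Mge: "x \<le> M" if "x \<in> \<Union>C" for x using fU that M_def by simp
    define X where "X = Z \<inter> {M<..}"
    have Xinf: "infinite X"
    proof -
      have "Z - {..M} \<subseteq> X" unfolding X_def by auto
      moreover have "infinite (Z - {..M})" using configD(1)[OF c] by simp
      ultimately show ?thesis using finite_subset by blast
    qed
    obtain s where s: "s \<in> C" "iseg s X" using configD(5)[OF c, of X] Xinf X_def by blast
    have "s \<noteq> {}" using s ne by blast
    then obtain x where "x \<in> s" by blast
    then have "x \<in> X" "x \<in> \<Union>C" using s iseg_subset by blast+
    then show False using Mge X_def by fastforce
  qed
  then show ?thesis unfolding barrier_def using configD(2,4)[OF c] cov by blast
qed

lemma Min_shift_gt:
  assumes "finite s" "x \<in> s - {Min s}"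
  shows "Min s < x"
  using assms by (metis DiffE Min_le insertI1 order_less_le)

lemma single_shift:
  assumes "a < b"
  shows "{a} \<lhd>\<^sub>B {b}"
  by (rule shift_relI) (use assms iseg_empty in auto)

lemma enum_inf_single:
  fixes Z0 :: "nat set"
  assumes "infinite Z0"
  shows "strict_mono (enumerate Z0)" "\<And>k. enumerate Z0 k \<in> Z0"
  using assms strict_mono_enumerate enumerate_in_set by auto

lemma no_singletons:
  assumes c: "config C Z h"
  shows "\<exists>Z0\<subseteq>Z. infinite Z0 \<and> (\<forall>s\<in>C. s \<subseteq> Z0 \<longrightarrow> card s \<noteq> 1)"
proof -
  define F where "F = {s\<in>C. card s = 1}"
  have fF: "\<forall>u\<in>F. finite u" using configD(2)[OF c] F_def by blast
  obtain Z0 where Z0: "Z0 \<subseteq> Z" "infinite Z0"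
    and alt: "(\<forall>u\<in>F. \<not> u \<subseteq> Z0) \<or> (\<forall>X\<subseteq>Z0. infinite X \<longrightarrow> (\<exists>u\<in>F. iseg u X))"
    using open_ramsey[OF fF configD(1)[OF c]] by blast
  show ?thesis
  proof (cases "\<forall>u\<in>F. \<not> u \<subseteq> Z0")
    case True
    then show ?thesis using Z0 F_def by blast
  next
    case False
    then have all: "\<forall>X\<subseteq>Z0. infinite X \<longrightarrow> (\<exists>u\<in>F. iseg u X)" using alt by blast
    have sing: "{a} \<in> C" if a: "a \<in> Z0" for a
    proof -
      define X where "X = insert a (Z0 \<inter> gt {a})"
      have "infinite X" using X_def infinite_gt[OF Z0(2), of "{a}"] by simp
      moreover have "X \<subseteq> Z0" using X_def a by blast
      ultimately obtain u where u: "u \<in> F" "iseg u X" using all by blast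
      have "card u = 1" using u(1) F_def by simp
      then obtain b where b: "u = {b}" by (rule card_1_singletonE)
      have "b \<in> X" using u b iseg_subset by blast
      have "b = a"
      proof (rule ccontr)
        assume "b \<noteq> a"
        then have "a < b" using \<open>b \<in> X\<close> X_def unfolding gt_def by auto
        moreover have "a \<in> X" using X_def by simp
        ultimately have "a \<in> u" using u(2) b unfolding init_seg_of_set_def by blast
        then show False using b \<open>b \<noteq> a\<close> by simp
      qed
      then show ?thesis using u b F_def by simp
    qed
    define e where "e = enumerate Z0"
    have sm: "strict_mono e" and eZ: "\<And>k. e k \<in> Z0" using enum_inf_single[OF Z0(2)] e_def by auto
    define q where "q = (\<lambda>k. h {e k})"
    have qP: "\<forall>k. q k \<in> P" using sing eZ configD(6)[OF c] q_def by blast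
    obtain i j where ij: "i < j" "le (q i) (q j)" using wqo_good[OF w qP] by blast
    have "{e i} \<lhd>\<^sub>B {e j}" using single_shift sm ij(1) by (simp add: strict_mono_less)
    then show ?thesis using configD(7)[OF c] sing eZ ij q_def by blast
  qed
qed

end



context bqoctx begin

definition D :: "nat set set \<Rightarrow> (nat set \<Rightarrow> 'a) \<Rightarrow> nat set \<Rightarrow> nat set \<Rightarrow> 'a set" where
  "D C h Y v = {p \<in> P. \<exists>t\<in>C. iseg v t \<and> v \<noteq> t \<and> t \<subseteq> v \<union> Y \<and> le p (h t)}"

lemma D_mono: "Y \<subseteq> Y' \<Longrightarrow> D C h Y v \<subseteq> D C h Y' v"
  unfolding D_def by blast

lemma D_gt: "D C h Y v = D C h (Y \<inter> gt v) v"
proof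
  show "D C h (Y \<inter> gt v) v \<subseteq> D C h Y v" by (rule D_mono) blast
  show "D C h Y v \<subseteq> D C h (Y \<inter> gt v) v"
  proof
    fix p assume "p \<in> D C h Y v"
    then obtain t where t: "p \<in> P" "t \<in> C" "iseg v t" "v \<noteq> t" "t \<subseteq> v \<union> Y" "le p (h t)"
      unfolding D_def by blast
    have "t - v \<subseteq> gt v" using iseg_diff_gt[OF t(3)] .
    then have "t \<subseteq> v \<union> (Y \<inter> gt v)" using t(5) by blast
    then show "p \<in> D C h (Y \<inter> gt v) v" using t unfolding D_def by blast
  qed
qed

lemma D_sub: "D C h Y v \<subseteq> P" unfolding D_def by blast

lemma D_down:
  assumes c: "config C Z h" and x: "x \<in> P" and y: "y \<in> D C h Y v" and xy: "le x y"
  shows "x \<in> D C h Y v"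
proof -
  obtain t where t: "y \<in> P" "t \<in> C" "iseg v t" "v \<noteq> t" "t \<subseteq> v \<union> Y" "le y (h t)"
    using y unfolding D_def by blast
  have "le x (h t)" using trans[OF x t(1) configD(6)[OF c t(2)] xy t(6)] .
  then show ?thesis using t x unfolding D_def by blast
qed

definition stab :: "nat set set \<Rightarrow> (nat set \<Rightarrow> 'a) \<Rightarrow> nat set \<Rightarrow> bool" where
  "stab C h Z1 \<longleftrightarrow> (\<forall>v Y'. finite v \<and> v \<subseteq> Z1 \<and> Y' \<subseteq> Z1 \<and> infinite Y' \<longrightarrow> D C h Y' v = D C h Z1 v)"

lemma stab_her: "stab C h Z1 \<Longrightarrow> Z2 \<subseteq> Z1 \<Longrightarrow> infinite Z2 \<Longrightarrow> stab C h Z2"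
  unfolding stab_def by (metis order_trans order_refl)

lemma stable_fusion:
  assumes c: "config C Z h" and Y: "infinite Y"
  shows "\<exists>Z1\<subseteq>Y. infinite Z1 \<and> stab C h Z1"
proof -
  define Q where "Q = (\<lambda>v Y. \<forall>Y'\<subseteq>Y. infinite Y' \<longrightarrow> D C h Y' v = D C h Y v)"
  have her: "\<And>s Y Y'. Q s Y \<Longrightarrow> Y' \<subseteq> Y \<Longrightarrow> infinite Y' \<Longrightarrow> Q s Y'"
    unfolding Q_def by (metis order_trans)
  have den: "\<exists>Y'\<subseteq>Y0. infinite Y' \<and> Q s Y'" if "finite s" "infinite Y0" for s Y0
  proof -
    define I where "I = {Y'. Y' \<subseteq> Y0 \<and> infinite Y'}"
    have "I \<noteq> {}" using that I_def by blast
    moreover have "\<forall>Y\<in>I. D C h Y s \<subseteq> P \<and> (\<forall>x\<in>P. \<forall>y\<in>D C h Y s. le x y \<longrightarrow> x \<in> D C h Y s)"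
      using D_sub D_down[OF c] by blast
    ultimately obtain Y1 where Y1: "Y1 \<in> I" "\<forall>Y\<in>I. D C h Y s \<subseteq> D C h Y1 s \<longrightarrow> D C h Y s = D C h Y1 s"
      using downset_min[OF w, of I "\<lambda>Y. D C h Y s"] by blast
    have "Q s Y1" unfolding Q_def
    proof (intro allI impI)
      fix Y' assume "Y' \<subseteq> Y1" "infinite Y'"
      then have "Y' \<in> I" "D C h Y' s \<subseteq> D C h Y1 s" using Y1(1) I_def D_mono by blast+
      then show "D C h Y' s = D C h Y1 s" using Y1(2) by blast
    qed
    then show ?thesis using Y1(1) I_def by blast
  qed
  have ex: "\<exists>Z1\<subseteq>Y. infinite Z1 \<and> (\<forall>s. finite s \<and> s \<subseteq> Z1 \<longrightarrow> Q s (Z1 \<inter> gt s))"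
    by (rule fusion[of Q Y, OF her den Y])
  then obtain Z1 where Z1: "Z1 \<subseteq> Y \<and> infinite Z1 \<and> (\<forall>s. finite s \<and> s \<subseteq> Z1 \<longrightarrow> Q s (Z1 \<inter> gt s))"
    by (elim exE)
  have "stab C h Z1" unfolding stab_def
  proof (intro allI impI)
    fix v Y' assume a: "finite v \<and> v \<subseteq> Z1 \<and> Y' \<subseteq> Z1 \<and> infinite Y'"
    have q: "Q v (Z1 \<inter> gt v)" using Z1 a by blast
    have "D C h Y' v = D C h (Y' \<inter> gt v) v" by (rule D_gt)
    also have "\<dots> = D C h (Z1 \<inter> gt v) v"
      using q infinite_gt[of Y' v] a unfolding Q_def by blast
    also have "\<dots> = D C h Z1 v" by (rule D_gt[symmetric])
    finally show "D C h Y' v = D C h Z1 v" .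
  qed
  then show ?thesis using Z1 by blast
qed

lemma D_upper:
  assumes c: "config C Z h" and st: "stab C h Z1" and v: "finite v" "v \<subseteq> Z1"
    and x: "x \<in> D C h Z1 v" and Y0: "Y0 \<subseteq> Z1 \<inter> gt v" "infinite Y0"
  shows "\<exists>Y'\<subseteq>Y0. infinite Y' \<and> (\<forall>X\<subseteq>Y'. infinite X \<longrightarrow>
            (\<exists>t\<in>C. iseg v t \<and> v \<noteq> t \<and> iseg t (v \<union> X) \<and> le x (h t)))"
proof -
  define F where "F = {t - v | t. t \<in> C \<and> iseg v t \<and> v \<noteq> t \<and> le x (h t)}"
  have fF: "\<forall>u\<in>F. finite u" using configD(2)[OF c] F_def by auto
  obtain Y' where Y': "Y' \<subseteq> Y0" "infinite Y'"
    and alt: "(\<forall>u\<in>F. \<not> u \<subseteq> Y') \<or> (\<forall>X\<subseteq>Y'. infinite X \<longrightarrow> (\<exists>u\<in>F. iseg u X))"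
    using open_ramsey[OF fF Y0(2)] by blast
  have Y'Z: "Y' \<subseteq> Z1" using Y' Y0 by blast
  show ?thesis
  proof (cases "\<forall>u\<in>F. \<not> u \<subseteq> Y'")
    case True
    have "x \<in> D C h Y' v" using st v x Y'Z Y'(2) unfolding stab_def by metis
    then obtain t where t: "t \<in> C" "iseg v t" "v \<noteq> t" "t \<subseteq> v \<union> Y'" "le x (h t)"
      unfolding D_def by blast
    then have "t - v \<in> F" using F_def by blast
    moreover have "t - v \<subseteq> Y'" using t(4) by blast
    ultimately show ?thesis using True by blast
  next
    case False
    then have all: "\<forall>X\<subseteq>Y'. infinite X \<longrightarrow> (\<exists>u\<in>F. iseg u X)" using alt by blast
    have "\<forall>X\<subseteq>Y'. infinite X \<longrightarrow> (\<exists>t\<in>C. iseg v t \<and> v \<noteq> t \<and> iseg t (v \<union> X) \<and> le x (h t))"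
    proof (intro allI impI)
      fix X assume X: "X \<subseteq> Y'" "infinite X"
      then obtain u where u: "u \<in> F" "iseg u X" using all by blast
      then obtain t where t: "u = t - v" "t \<in> C" "iseg v t" "v \<noteq> t" "le x (h t)" using F_def by blast
      have "v \<subseteq> t" using iseg_subset[OF t(3)] .
      then have tv: "t = v \<union> u" using t(1) by blast
      have "X \<subseteq> gt v" using X Y' Y0 by blast
      then have "iseg t (v \<union> X)" using iseg_union_gt[OF v(1) _ u(2)] tv by simp
      then show "\<exists>t\<in>C. iseg v t \<and> v \<noteq> t \<and> iseg t (v \<union> X) \<and> le x (h t)" using t by blast
    qed
    then show ?thesis using Y' by blast
  qed
qed

lemma D_ideal:
  assumes c: "config C Z h" and st: "stab C h Z1" and Z1: "infinite Z1"
    and v: "finite v" "v \<subseteq> Z1" and ne: "D C h Z1 v \<noteq> {}"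
  shows "ideal_on P le (D C h Z1 v)"
proof -
  have dir: "\<exists>z\<in>D C h Z1 v. le x z \<and> le y z" if xy: "x \<in> D C h Z1 v" "y \<in> D C h Z1 v" for x y
  proof -
    have Y0: "Z1 \<inter> gt v \<subseteq> Z1 \<inter> gt v" "infinite (Z1 \<inter> gt v)" using infinite_gt[OF Z1 v(1)] by auto
    obtain Y1 where Y1: "Y1 \<subseteq> Z1 \<inter> gt v" "infinite Y1"
      and a1: "\<forall>X\<subseteq>Y1. infinite X \<longrightarrow> (\<exists>t\<in>C. iseg v t \<and> v \<noteq> t \<and> iseg t (v \<union> X) \<and> le x (h t))"
      using D_upper[OF c st v xy(1) Y0] by blast
    obtain Y2 where Y2: "Y2 \<subseteq> Y1" "infinite Y2"
      and a2: "\<forall>X\<subseteq>Y2. infinite X \<longrightarrow> (\<exists>t\<in>C. iseg v t \<and> v \<noteq> t \<and> iseg t (v \<union> X) \<and> le y (h t))"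
      using D_upper[OF c st v xy(2) Y1(1) Y1(2)] by blast
    obtain t1 where t1: "t1 \<in> C" "iseg v t1" "v \<noteq> t1" "iseg t1 (v \<union> Y2)" "le x (h t1)"
      using a1 Y2 by blast
    obtain t2 where t2: "t2 \<in> C" "iseg t2 (v \<union> Y2)" "le y (h t2)"
      using a2 Y2 by blast
    have "t1 = t2" using config_unique[OF c t1(1) t2(1) t1(4) t2(2)] .
    moreover have "h t1 \<in> D C h Z1 v"
    proof -
      have "t1 \<subseteq> v \<union> Z1" using t1(4) iseg_subset Y2 Y1 by blast
      moreover have "h t1 \<in> P" using configD(6)[OF c t1(1)] .
      ultimately show ?thesis using t1 refl unfolding D_def by blast
    qed
    ultimately show ?thesis using t1 t2 by blast
  qed
  show ?thesis unfolding ideal_on_def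
    using ne D_sub D_down[OF c] dir by blast
qed

end



lemma shift_iseg:
  assumes st: "s \<lhd>\<^sub>B t" and ne: "s \<noteq> {}" and tT: "iseg t T" and T: "T \<subseteq> gt {Min s}"
  shows "iseg s (insert (Min s) T)"
proof -
  have fs: "finite s" using st shift_rel_iff by blast
  have d1: "iseg (s - {Min s}) t" using shift_relD[OF st ne] by blast
  have d2: "iseg (s - {Min s}) T" using iseg_trans[OF d1 tT] .
  have ms: "Min s \<in> s" using fs ne by simp
  show ?thesis unfolding init_seg_of_set_def
  proof (intro conjI ballI impI)
    show "finite s" by fact
    show "s \<subseteq> insert (Min s) T"
    proof
      fix x assume "x \<in> s"
      then show "x \<in> insert (Min s) T" using iseg_subset[OF d2] by blast
    qed
  next
    fix x y assume xy: "x \<in> insert (Min s) T" "y \<in> s" "x < y"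
    show "x \<in> s"
    proof (cases "x = Min s")
      case True then show ?thesis using ms by simp
    next
      case False
      then have xT: "x \<in> T" using xy(1) by blast
      then have "Min s < x" using T unfolding gt_def by blast
      then have "y \<in> s - {Min s}" using xy by auto
      then have "x \<in> s - {Min s}" using d2 xT xy(3) unfolding init_seg_of_set_def by blast
      then show ?thesis by blast
    qed
  qed
qed

lemma card_min_eq:
  assumes "finite w" "w' \<subseteq> w" "card w \<le> card w'"
  shows "w' = w"
proof -
  have "card w' \<le> card w" using card_mono[OF assms(1,2)] .
  then have "card w' = card w" using assms(3) by simp
  then show ?thesis using card_subset_eq[OF assms(1,2)] by simp
qed

context bqoctx begin

lemma sh_psubset:
  assumes "finite u" "u \<noteq> {}"
  shows "u - {Min u} \<subset> u"
  using assms Min_in by blast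

lemma noCsub:
  assumes c: "config C Z h" and u: "u \<in> C" and s: "s \<in> C"
  shows "\<not> s \<subseteq> u - {Min u}"
proof
  assume a: "s \<subseteq> u - {Min u}"
  have "u - {Min u} \<subset> u" using sh_psubset configD(2)[OF c u] config_nempty[OF c] u by blast
  then have "s \<subset> u" using a by blast
  then show False using configD(4)[OF c s u] by blast
qed

lemma succ_exists:
  assumes c: "config C Z h" and s: "s \<in> C" and Y: "Y \<subseteq> Z" "infinite Y" "Y \<subseteq> gt s"
  shows "\<exists>t\<in>C. iseg (s - {Min s}) t \<and> s - {Min s} \<noteq> t \<and> t \<subseteq> (s - {Min s}) \<union> Y \<and> s \<lhd>\<^sub>B t"
proof -
  define s' where "s' = s - {Min s}"
  have fs: "finite s" using configD(2)[OF c s] .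
  have ne: "s \<noteq> {}" using config_nempty[OF c] s by blast
  have fs': "finite s'" using fs s'_def by simp
  have gt': "Y \<subseteq> gt s'" using Y(3) s'_def unfolding gt_def by blast
  define X where "X = s' \<union> Y"
  have XZ: "X \<subseteq> Z" using X_def configD(3)[OF c s] Y s'_def by blast
  have Xinf: "infinite X" using X_def Y by simp
  obtain t where t: "t \<in> C" "iseg t X" using configD(5)[OF c XZ Xinf] by blast
  have s'X: "iseg s' X" using iseg_union_gt_self[OF fs' gt'] X_def by simp
  have nt: "\<not> t \<subseteq> s'" using noCsub[OF c s t(1)] s'_def by simp
  have "iseg s' t \<or> iseg t s'" using iseg_cmp[OF s'X t(2)] .
  then have ist: "iseg s' t" using nt iseg_subset by blast
  have neq: "s' \<noteq> t" using nt by blast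
  have tsub: "t \<subseteq> s' \<union> Y" using iseg_subset[OF t(2)] X_def by simp
  have ft: "finite t" using configD(2)[OF c t(1)] .
  have gtm: "\<forall>x\<in>t. Min s < x"
  proof
    fix x assume "x \<in> t"
    then have "x \<in> s' \<or> x \<in> Y" using tsub by blast
    then show "Min s < x"
    proof
      assume "x \<in> s'" then show ?thesis using Min_shift_gt[OF fs] s'_def by blast
    next
      assume "x \<in> Y" then show ?thesis using Y(3) Min_in[OF fs ne] unfolding gt_def by blast
    qed
  qed
  have "s \<lhd>\<^sub>B t" using shift_relI[OF fs ne ft] ist neq gtm s'_def by simp
  then show ?thesis using t(1) ist neq tsub s'_def by blast
qed

lemma card_sh:
  assumes "finite c" "c \<noteq> {}"
  shows "card (c - {Min c}) < card c"
  using assms by (meson Min_in card_Diff1_less)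

lemma stage:
  assumes c: "config C Z h"
  shows "\<exists>C' Z' h'. config C' Z' h' \<and> Z' \<subseteq> Z \<and>
    (\<forall>X\<subseteq>Z'. infinite X \<longrightarrow> (\<forall>c\<in>C. \<forall>c'\<in>C'. iseg c X \<longrightarrow> iseg c' (X - {Inf X}) \<longrightarrow> card c' < card c))"
proof -
  obtain Z0 where Z0: "Z0 \<subseteq> Z" "infinite Z0" and ns: "\<forall>s\<in>C. s \<subseteq> Z0 \<longrightarrow> card s \<noteq> 1"
    using no_singletons[OF c] by blast
  obtain Z1 where Z1: "Z1 \<subseteq> Z0" "infinite Z1" and st: "stab C h Z1"
    using stable_fusion[OF c Z0(2)] by blast
  have Z1Z: "Z1 \<subseteq> Z" using Z0 Z1 by blast
  define sh where "sh = (\<lambda>s::nat set. s - {Min s})"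
  define g where "g = (\<lambda>s. D C h Z1 (sh s))"
  have fin: "\<And>s. s \<in> C \<Longrightarrow> finite s" using configD(2)[OF c] .
  have nemp: "\<And>s. s \<in> C \<Longrightarrow> s \<noteq> {}" using config_nempty[OF c] by blast
  have sh_ne: "sh s \<noteq> {}" if "s \<in> C" "s \<subseteq> Z1" for s
  proof -
    have "card s \<noteq> 1" using ns that Z1 by blast
    moreover have "card s \<noteq> 0" using fin nemp that by simp
    ultimately have "card s \<ge> 2" by linarith
    then have "card (sh s) \<ge> 1" unfolding sh_def using fin[OF that(1)] nemp[OF that(1)]
      by (simp add: Min_in)
    then show ?thesis by auto
  qed
  have sh_fin: "finite (sh s)" if "s \<in> C" for s using fin[OF that] sh_def by simp
  have sh_sub: "sh s \<subseteq> s" for s using sh_def by blast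
  have g_ideal: "ideal_on P le (g s)" if s: "s \<in> C" "s \<subseteq> Z1" for s
  proof -
    have Y: "Z1 \<inter> gt s \<subseteq> Z" "infinite (Z1 \<inter> gt s)" "Z1 \<inter> gt s \<subseteq> gt s"
      using Z1Z infinite_gt[OF Z1(2) fin[OF s(1)]] by auto
    obtain t where t: "t \<in> C" "iseg (sh s) t" "sh s \<noteq> t" "t \<subseteq> sh s \<union> (Z1 \<inter> gt s)"
      using succ_exists[OF c s(1) Y] sh_def by blast
    have "h t \<in> D C h Z1 (sh s)"
      using t configD(6)[OF c t(1)] refl unfolding D_def by blast
    then have "D C h Z1 (sh s) \<noteq> {}" by blast
    then show ?thesis unfolding g_def
      using D_ideal[OF c st Z1(2) sh_fin[OF s(1)]] sh_sub s by blast
  qed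
  have g_bad: "\<not> g s \<subseteq> g t" if s: "s \<in> C" "s \<subseteq> Z1" and t: "t \<in> C" "t \<subseteq> Z1" and st': "s \<lhd>\<^sub>B t" for s t
  proof
    assume sub: "g s \<subseteq> g t"
    have d: "iseg (sh s) t" "sh s \<noteq> t" using shift_relD[OF st' nemp[OF s(1)]] sh_def by auto
    have "t \<subseteq> sh s \<union> Z1" using t by blast
    then have "h t \<in> g s" unfolding g_def D_def using d t configD(6)[OF c t(1)] refl by blast
    then have htg: "h t \<in> g t" using sub by blast
    have Yt: "Z1 \<inter> gt t \<subseteq> Z1" "infinite (Z1 \<inter> gt t)" using infinite_gt[OF Z1(2) fin[OF t(1)]] by auto
    have "g t = D C h (Z1 \<inter> gt t) (sh t)"
      using st sh_fin[OF t(1)] sh_sub t(2) Yt unfolding stab_def g_def by (metis order_trans)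
    then obtain u where u: "u \<in> C" "iseg (sh t) u" "sh t \<noteq> u" "u \<subseteq> sh t \<union> (Z1 \<inter> gt t)"
      "le (h t) (h u)" using htg unfolding D_def by blast
    have gtm: "\<forall>x\<in>u. Min t < x"
    proof
      fix x assume "x \<in> u"
      then have "x \<in> sh t \<or> x \<in> gt t" using u(4) by blast
      then show "Min t < x"
      proof
        assume "x \<in> sh t" then show ?thesis using Min_shift_gt[OF fin[OF t(1)]] sh_def by blast
      next
        assume "x \<in> gt t" then show ?thesis using Min_in[OF fin[OF t(1)] nemp[OF t(1)]] unfolding gt_def by blast
      qed
    qed
    have "t \<lhd>\<^sub>B u" using shift_relI[OF fin[OF t(1)] nemp[OF t(1)] fin[OF u(1)]] u gtm sh_def by simp
    then show False using configD(7)[OF c t(1) u(1)] u(5) by blast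
  qed
  define A where "A = {s\<in>C. s \<subseteq> Z1 \<and> \<not> principal_on P le (g s)}"
  have fA: "\<forall>u\<in>A. finite u" using A_def fin by blast
  obtain Z2 where Z2: "Z2 \<subseteq> Z1" "infinite Z2"
    and alt: "(\<forall>u\<in>A. \<not> u \<subseteq> Z2) \<or> (\<forall>X\<subseteq>Z2. infinite X \<longrightarrow> (\<exists>u\<in>A. iseg u X))"
    using open_ramsey[OF fA Z1(2)] by blast
  have Z2Z: "Z2 \<subseteq> Z" using Z2 Z1Z by blast
  have in_cover: "s \<in> G" if cov: "\<forall>X\<subseteq>W. infinite X \<longrightarrow> (\<exists>u\<in>G. iseg u X)" and GC: "G \<subseteq> C"
    and W: "W \<subseteq> Z" "infinite W" and s: "s \<in> C" "s \<subseteq> W" for G W s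
  proof -
    define X where "X = s \<union> (W \<inter> gt s)"
    have "X \<subseteq> W" "infinite X" using X_def s W infinite_gt[OF W(2) fin[OF s(1)]] by auto
    then obtain u where u: "u \<in> G" "iseg u X" using cov by blast
    have "iseg s X" using iseg_union_gt_self[OF fin[OF s(1)]] X_def by blast
    then have "u = s" using config_unique[OF c _ s(1) u(2)] u GC by blast
    then show ?thesis using u by blast
  qed
  have princ: "principal_on P le (g s)" if s: "s \<in> C" "s \<subseteq> Z2" for s
  proof (cases "\<forall>u\<in>A. \<not> u \<subseteq> Z2")
    case True
    then show ?thesis using s Z2 A_def by blast
  next
    case False
    then have cov: "\<forall>X\<subseteq>Z2. infinite X \<longrightarrow> (\<exists>u\<in>A. iseg u X)" using alt by blast
    define C2 where "C2 = {s\<in>C. s \<subseteq> Z2}"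
    have allA: "\<forall>s\<in>C2. s \<in> A"
      using in_cover[OF cov _ Z2Z Z2(2)] C2_def A_def by blast
    have c2: "config C2 Z2 h" using config_restrict[OF c Z2Z Z2(2)] C2_def by simp
    have "g ` C2 \<subseteq> nonprincipal_ideals P le"
    proof
      fix x assume "x \<in> g ` C2"
      then obtain s where s: "s \<in> C2" "x = g s" by blast
      have "s \<in> C" "s \<subseteq> Z1" using s C2_def Z2 by auto
      then have "ideal_on P le (g s)" using g_ideal by blast
      moreover have "\<not> principal_on P le (g s)" using allA s A_def by blast
      ultimately show "x \<in> nonprincipal_ideals P le" using s unfolding nonprincipal_ideals_def by blast
    qed
    then obtain s1 t1 where st1: "s1 \<in> C2" "t1 \<in> C2" "s1 \<lhd>\<^sub>B t1" "g s1 \<subseteq> g t1"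
      using apply_bqo[OF H config_barrier[OF c2]] by blast
    have "s1 \<in> C" "s1 \<subseteq> Z1" "t1 \<in> C" "t1 \<subseteq> Z1" using st1 C2_def Z2 by auto
    then show ?thesis using g_bad st1 by blast
  qed
  define V where "V = {sh s | s. s \<in> C \<and> s \<subseteq> Z2}"
  define hm where "hm = (\<lambda>v. SOME p. p \<in> P \<and> D C h Z1 v = {y\<in>P. le y p})"
  have VZ: "v \<subseteq> Z2" "finite v" if "v \<in> V" for v using that V_def sh_sub sh_fin by blast+
  have hmV: "hm v \<in> P \<and> D C h Z1 v = {y\<in>P. le y (hm v)}" if v: "v \<in> V" for v
  proof -
    obtain s where s: "s \<in> C" "s \<subseteq> Z2" "v = sh s" using v V_def by blast
    have "\<exists>p. p \<in> P \<and> D C h Z1 v = {y\<in>P. le y p}"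
      using princ[OF s(1,2)] s(3) unfolding principal_on_def g_def by blast
    then show ?thesis unfolding hm_def by (rule someI_ex)
  qed
  have F1: "le (h t) (hm v)" if "v \<in> V" "t \<in> C" "iseg v t" "v \<noteq> t" "t \<subseteq> Z1" for v t
  proof -
    have "h t \<in> D C h Z1 v" using that configD(6)[OF c that(2)] refl unfolding D_def by blast
    then show ?thesis using hmV[OF that(1)] by blast
  qed
  have F2: "\<exists>t\<in>C. iseg v t \<and> v \<noteq> t \<and> t \<subseteq> v \<union> Y \<and> le (hm v) (h t)"
    if v: "v \<in> V" and Y: "Y \<subseteq> Z1" "infinite Y" for v Y
  proof -
    have "hm v \<in> D C h Z1 v" using hmV[OF v] refl by blast
    moreover have "D C h Y v = D C h Z1 v"
      using st VZ[OF v] Y Z2 unfolding stab_def by (meson order_trans)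
    ultimately show ?thesis unfolding D_def by blast
  qed
  have F3: "le (hm w) (hm v)" if vw: "v \<in> V" "w \<in> V" "iseg v w" for v w
  proof -
    have "hm w \<in> D C h Z1 w" using hmV[OF vw(2)] refl by blast
    then obtain t where t: "t \<in> C" "iseg w t" "w \<noteq> t" "t \<subseteq> w \<union> Z1" "le (hm w) (h t)"
      unfolding D_def by blast
    have "iseg v t" using iseg_trans[OF vw(3) t(2)] .
    moreover have "v \<noteq> t"
    proof
      assume "v = t"
      then have "w \<subseteq> v" "v \<subseteq> w" using t(2) vw(3) iseg_subset by blast+
      then show False using t(3) \<open>v = t\<close> by blast
    qed
    moreover have "t \<subseteq> v \<union> Z1" using t(4) VZ[OF vw(2)] Z2 by blast
    ultimately have "hm w \<in> D C h Z1 v" using t hmV[OF vw(2)] unfolding D_def by blast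
    then show ?thesis using hmV[OF vw(1)] by blast
  qed
  define A6 where "A6 = {t\<in>C. t \<subseteq> Z2 \<and> (\<forall>v\<in>V. iseg v t \<and> v \<noteq> t \<longrightarrow> hm v = h t)}"
  have fA6: "\<forall>u\<in>A6. finite u" using A6_def fin by blast
  obtain Z3 where Z3: "Z3 \<subseteq> Z2" "infinite Z3"
    and alt6: "(\<forall>u\<in>A6. \<not> u \<subseteq> Z3) \<or> (\<forall>X\<subseteq>Z3. infinite X \<longrightarrow> (\<exists>u\<in>A6. iseg u X))"
    using open_ramsey[OF fA6 Z2(2)] by blast
  have Z3Z: "Z3 \<subseteq> Z" "Z3 \<subseteq> Z1" using Z3 Z2 Z1Z by blast+
  have strong: "hm v = h t" if t: "t \<in> C" "t \<subseteq> Z3" and v: "v \<in> V" "iseg v t" "v \<noteq> t" for t v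
  proof (cases "\<forall>u\<in>A6. \<not> u \<subseteq> Z3")
    case False
    then have cov: "\<forall>X\<subseteq>Z3. infinite X \<longrightarrow> (\<exists>u\<in>A6. iseg u X)" using alt6 by blast
    have "t \<in> A6" using in_cover[OF cov _ Z3Z(1) Z3(2) t] A6_def by blast
    then show ?thesis using v A6_def by blast
  next
    case True
    have bad3: "\<exists>v\<in>V. iseg v t \<and> v \<noteq> t \<and> hm v \<noteq> h t" if "t \<in> C" "t \<subseteq> Z3" for t
      using True that Z3 A6_def by blast
    have claim: "\<forall>v\<in>V. v \<subseteq> Z3 \<longrightarrow> card v = n \<longrightarrow> False" for n
    proof (induction n rule: less_induct)
      case (less n)
      show ?case
      proof (intro ballI impI)
        fix v assume v: "v \<in> V" "v \<subseteq> Z3" "card v = n"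
        have Y: "Z3 \<inter> gt v \<subseteq> Z1" "infinite (Z3 \<inter> gt v)"
          using Z3Z infinite_gt[OF Z3(2) VZ(2)[OF v(1)]] by auto
        obtain t where t: "t \<in> C" "iseg v t" "v \<noteq> t" "t \<subseteq> v \<union> (Z3 \<inter> gt v)" "le (hm v) (h t)"
          using F2[OF v(1) Y] by blast
        have tZ3: "t \<subseteq> Z3" using t(4) v(2) by blast
        have tZ1: "t \<subseteq> Z1" using tZ3 Z3Z by blast
        have eq: "h t = hm v"
          using antisym[OF configD(6)[OF c t(1)] _ F1[OF v(1) t(1-3) tZ1] t(5)] hmV[OF v(1)] by blast
        obtain v1 where v1: "v1 \<in> V" "iseg v1 t" "v1 \<noteq> t" "hm v1 \<noteq> h t" using bad3[OF t(1) tZ3] by blast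
        have "iseg v v1 \<or> iseg v1 v" using iseg_cmp[OF t(2) v1(2)] .
        then show False
        proof
          assume "iseg v v1"
          then have "le (hm v1) (hm v)" using F3[OF v(1) v1(1)] by blast
          moreover have "le (h t) (hm v1)" using F1[OF v1(1) t(1) v1(2) v1(3) tZ1] .
          ultimately have "hm v1 = h t"
            using antisym hmV[OF v1(1)] configD(6)[OF c t(1)] eq by metis
          then show False using v1(4) by blast
        next
          assume a: "iseg v1 v"
          have "v1 \<noteq> v"
          proof
            assume "v1 = v" then show False using v1(4) eq by simp
          qed
          then have "v1 \<subset> v" using a iseg_subset by blast
          then have "card v1 < card v" using VZ(2)[OF v(1)] psubset_card_mono by blast
          moreover have "v1 \<subseteq> Z3" using \<open>v1 \<subset> v\<close> v(2) by blast
          ultimately show False using less.IH v(3) v1(1) by blast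
        qed
      qed
    qed
    have "v \<subseteq> Z3" using v(2) t(2) iseg_subset by blast
    then show ?thesis using claim v(1) by blast
  qed
  define V3 where "V3 = {sh s | s. s \<in> C \<and> s \<subseteq> Z3}"
  have V3V: "V3 \<subseteq> V" using V3_def V_def Z3 by blast
  define F where "F = {v\<in>V3. \<forall>w\<in>V3. iseg w v \<longrightarrow> w = v}"
  define z0 where "z0 = Inf Z3"
  have z0Z3: "z0 \<in> Z3" using z0_def Z3(2) wellorder_InfI by (metis infinite_imp_nonempty ex_in_conv)
  have z0le: "z0 \<le> x" if "x \<in> Z3" for x using z0_def that wellorder_Inf_le1 by blast
  define Z4 where "Z4 = Z3 - {z0}"
  have Z4: "Z4 \<subseteq> Z3" "infinite Z4" using Z4_def Z3(2) by auto
  have covF: "\<exists>v\<in>F. iseg v X" if X: "X \<subseteq> Z4" "infinite X" for X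
  proof -
    define X' where "X' = insert z0 X"
    have X'Z: "X' \<subseteq> Z" "infinite X'" using X'_def X Z4 Z3Z z0Z3 by auto
    obtain s where s: "s \<in> C" "iseg s X'" using configD(5)[OF c X'Z] by blast
    have sne: "s \<noteq> {}" using nemp s(1) .
    have "Min s \<in> X'" "\<forall>x\<in>X'. Min s \<le> x" using iseg_Min_inf[OF s(2) sne] by blast+
    moreover have "X' \<subseteq> Z3" using X'_def X Z4 z0Z3 by blast
    ultimately have ms: "Min s = z0" using X'_def z0le by (meson antisym_conv insertI1 subsetD)
    have z0X: "z0 \<notin> X" using X Z4_def by blast
    have "iseg (sh s) X"
      using iseg_remove_min[OF s(2) sne] ms X'_def z0X unfolding sh_def by simp
    moreover have "s \<subseteq> Z3" using s(2) iseg_subset \<open>X' \<subseteq> Z3\<close> by blast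
    ultimately have Wne: "\<exists>w. w \<in> V3 \<and> iseg w X" using s(1) V3_def by blast
    obtain w where w: "w \<in> V3 \<and> iseg w X" and wmin: "\<forall>w'. w' \<in> V3 \<and> iseg w' X \<longrightarrow> card w \<le> card w'"
      using ex_has_least_nat[of "\<lambda>w. w \<in> V3 \<and> iseg w X" _ card] Wne by blast
    have "w \<in> F"
      unfolding F_def
    proof (intro CollectI conjI ballI impI)
      show "w \<in> V3" using w by blast
      fix w' assume w': "w' \<in> V3" "iseg w' w"
      then have "iseg w' X" using iseg_trans w by blast
      then have "card w \<le> card w'" using wmin w' by blast
      moreover have "w' \<subseteq> w" "finite w" using w'(2) iseg_subset w iseg_finite by blast+
      ultimately show "w' = w" using card_min_eq by blast
    qed
    then show ?thesis using w by blast
  qed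
  define Fm where "Fm = {v\<in>F. v \<subseteq> Z4 \<and> (\<forall>w\<in>F. w \<subseteq> v \<longrightarrow> w = v)}"
  have Ffin: "finite v" if "v \<in> F" for v using that F_def V3_def sh_fin by blast
  have fFm: "\<forall>u\<in>Fm. finite u" using Fm_def Ffin by blast
  obtain Z5 where Z5: "Z5 \<subseteq> Z4" "infinite Z5"
    and alt8: "(\<forall>u\<in>Fm. \<not> u \<subseteq> Z5) \<or> (\<forall>X\<subseteq>Z5. infinite X \<longrightarrow> (\<exists>u\<in>Fm. iseg u X))"
    using open_ramsey[OF fFm Z4(2)] by blast
  have cov8: "\<forall>X\<subseteq>Z5. infinite X \<longrightarrow> (\<exists>u\<in>Fm. iseg u X)"
  proof (cases "\<forall>u\<in>Fm. \<not> u \<subseteq> Z5")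
    case False then show ?thesis using alt8 by blast
  next
    case True
    obtain v where v: "v \<in> F" "iseg v Z5" using covF Z5 Z4 by blast
    have vZ5: "v \<subseteq> Z5" using v iseg_subset by blast
    have ex: "\<exists>w. w \<in> F \<and> w \<subseteq> v" using v by blast
    obtain w where w: "w \<in> F \<and> w \<subseteq> v" and wmin: "\<forall>w'. w' \<in> F \<and> w' \<subseteq> v \<longrightarrow> card w \<le> card w'"
      using ex_has_least_nat[of "\<lambda>w. w \<in> F \<and> w \<subseteq> v" _ card] ex by blast
    have "w \<in> Fm"
      unfolding Fm_def
    proof (intro CollectI conjI ballI impI)
      show "w \<in> F" using w by blast
      show "w \<subseteq> Z4" using w vZ5 Z5 by blast
      fix w' assume w': "w' \<in> F" "w' \<subseteq> w"
      then have "card w \<le> card w'" using wmin w by blast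
      moreover have "finite w" using Ffin w by blast
      ultimately show "w' = w" using w'(2) card_min_eq by blast
    qed
    then show ?thesis using True w vZ5 by blast
  qed
  define C' where "C' = {v\<in>Fm. v \<subseteq> Z5}"
  have C'F: "C' \<subseteq> F" using C'_def Fm_def by blast
  have C'V3: "C' \<subseteq> V3" using C'F F_def by blast
  have Z5Z3: "Z5 \<subseteq> Z3" using Z5 Z4 by blast
  have V3ne: "v \<noteq> {}" if "v \<in> V3" for v
    using that V3_def sh_ne Z3 Z2 by blast
  have V3C: "\<exists>u\<in>C. v = u - {Min u}" if "v \<in> V3" for v using that V3_def sh_def by blast
  have bad': "\<not> le (hm c1) (hm c2)" if cs: "c1 \<in> C'" "c2 \<in> C'" "c1 \<lhd>\<^sub>B c2" for c1 c2
  proof -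
    have c1V: "c1 \<in> V3" and c2V: "c2 \<in> V3" using cs C'V3 by blast+
    have c1ne: "c1 \<noteq> {}" and c2ne: "c2 \<noteq> {}" using V3ne c1V c2V by blast+
    obtain u1 where u1: "u1 \<in> C" "c1 = u1 - {Min u1}" using V3C c1V by blast
    obtain u2 where u2: "u2 \<in> C" "c2 = u2 - {Min u2}" using V3C c2V by blast
    define m where "m = Min c1"
    have d: "iseg (c1 - {m}) c2" "c1 - {m} \<noteq> c2" "\<forall>x\<in>c2. m < x"
      using shift_relD[OF cs(3) c1ne] m_def by auto
    have fc2: "finite c2" using c2V V3_def sh_fin by blast
    have fc1: "finite c1" using c1V V3_def sh_fin by blast
    have c1Z: "c1 \<subseteq> Z3" "c2 \<subseteq> Z3" using cs C'_def Z5Z3 by blast+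
    define T where "T = c2 \<union> (Z3 \<inter> gt c2)"
    have c2T: "iseg c2 T" using iseg_union_gt_self[OF fc2] T_def by blast
    have TZ: "T \<subseteq> Z3" "infinite T" using T_def c1Z infinite_gt[OF Z3(2) fc2] by auto
    have Tgt: "T \<subseteq> gt {m}"
    proof
      fix x assume "x \<in> T"
      then have "x \<in> c2 \<or> x \<in> gt c2" using T_def by blast
      then have "m < x"
      proof
        assume "x \<in> c2" then show ?thesis using d(3) by blast
      next
        assume xg: "x \<in> gt c2"
        obtain y where y: "y \<in> c2" using c2ne by blast
        then have "y < x" using xg unfolding gt_def by blast
        moreover have "m < y" using y d(3) by blast
        ultimately show ?thesis by simp
      qed
      then show "x \<in> gt {m}" unfolding gt_def by simp
    qed
    define Y where "Y = insert m T"
    have c1Y: "iseg c1 Y" using shift_iseg[OF cs(3) c1ne c2T] Tgt Y_def m_def by simp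
    have mc1: "m \<in> c1" using m_def fc1 c1ne by simp
    have YZ: "Y \<subseteq> Z" "infinite Y" using Y_def TZ Z3Z mc1 c1Z by auto
    obtain s where s: "s \<in> C" "iseg s Y" using configD(5)[OF c YZ] by blast
    have ns1: "\<not> s \<subseteq> c1" using noCsub[OF c u1(1) s(1)] u1(2) by simp
    have "iseg c1 s \<or> iseg s c1" using iseg_cmp[OF c1Y s(2)] .
    then have c1s: "iseg c1 s" using ns1 iseg_subset by blast
    have c1s': "c1 \<noteq> s" using ns1 by blast
    have sZ3: "s \<subseteq> Z3" using s(2) iseg_subset Y_def TZ mc1 c1Z by blast
    have e1: "hm c1 = h s" using strong[OF s(1) sZ3 _ c1s c1s'] V3V c1V by blast
    obtain t where t: "t \<in> C" "iseg t T" using configD(5)[OF c _ TZ(2)] TZ Z3Z by blast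
    have nt2: "\<not> t \<subseteq> c2" using noCsub[OF c u2(1) t(1)] u2(2) by simp
    have "iseg c2 t \<or> iseg t c2" using iseg_cmp[OF c2T t(2)] .
    then have c2t: "iseg c2 t" using nt2 iseg_subset by blast
    have c2t': "c2 \<noteq> t" using nt2 by blast
    have tZ3: "t \<subseteq> Z3" using t(2) iseg_subset TZ by blast
    have e2: "hm c2 = h t" using strong[OF t(1) tZ3 _ c2t c2t'] V3V c2V by blast
    have sne: "s \<noteq> {}" using nemp s(1) .
    have fs: "finite s" using fin s(1) .
    have ms: "Min s = m"
    proof -
      have "m \<in> s" using c1s mc1 iseg_subset by blast
      moreover have "\<forall>x\<in>Y. m \<le> x" using Y_def Tgt unfolding gt_def by auto
      moreover have "Min s \<in> Y" using Min_in[OF fs sne] s(2) iseg_subset by blast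
      ultimately have "Min s \<le> m" "m \<le> Min s" using fs by auto
      then show ?thesis by simp
    qed
    have mT: "m \<notin> T" using Tgt unfolding gt_def by blast
    have sT: "iseg (s - {m}) T" using iseg_remove_min[OF s(2) sne] ms Y_def mT by simp
    have ntt: "\<not> t \<subseteq> s - {m}" using noCsub[OF c s(1) t(1)] ms by simp
    have "iseg (s - {m}) t \<or> iseg t (s - {m})" using iseg_cmp[OF sT t(2)] .
    then have st1: "iseg (s - {m}) t" using ntt iseg_subset by blast
    have st2: "s - {m} \<noteq> t" using ntt by blast
    have st3: "\<forall>x\<in>t. Min s < x" using t(2) iseg_subset Tgt ms unfolding gt_def by blast
    have "s \<lhd>\<^sub>B t" using shift_relI[OF fs sne fin[OF t(1)]] st1 st2 st3 ms by simp
    then have "\<not> le (h s) (h t)" using configD(7)[OF c s(1) t(1)] by blast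
    then show ?thesis using e1 e2 by simp
  qed
  have p1: "infinite Z5" using Z5 by blast
  have p2: "\<forall>s\<in>C'. finite s \<and> s \<subseteq> Z5" using C'F Ffin C'_def by blast
  have p3: "\<forall>s\<in>C'. \<forall>t\<in>C'. \<not> s \<subset> t"
  proof (intro ballI notI)
    fix s t assume st: "s \<in> C'" "t \<in> C'" "s \<subset> t"
    have "s \<in> F" using st C'F by blast
    moreover have "t \<in> Fm" using st C'_def by blast
    ultimately show False using st(3) unfolding Fm_def by blast
  qed
  have p4: "\<forall>X\<subseteq>Z5. infinite X \<longrightarrow> (\<exists>s\<in>C'. iseg s X)"
  proof (intro allI impI)
    fix X assume X: "X \<subseteq> Z5" "infinite X"
    then obtain u where u: "u \<in> Fm" "iseg u X" using cov8 by blast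
    then have "u \<in> C'" using C'_def iseg_subset X by blast
    then show "\<exists>s\<in>C'. iseg s X" using u by blast
  qed
  have p5: "\<forall>s\<in>C'. hm s \<in> P" using C'V3 V3V hmV by blast
  have p6: "\<forall>s\<in>C'. \<forall>t\<in>C'. s \<lhd>\<^sub>B t \<longrightarrow> \<not> le (hm s) (hm t)" using bad' by blast
  have cfg': "config C' Z5 hm" unfolding config_def by (intro conjI p1 p2 p3 p4 p5 p6)
  have len: "card c' < card c" if X: "X \<subseteq> Z5" "infinite X" and cc: "c \<in> C" "c' \<in> C'"
    and ic: "iseg c X" "iseg c' (X - {Inf X})" for X c c'
  proof -
    have cne: "c \<noteq> {}" using nemp cc(1) .
    have fc: "finite c" using fin cc(1) .
    have "Min c \<in> X" "\<forall>x\<in>X. Min c \<le> x" using iseg_Min_inf[OF ic(1) cne] by blast+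
    then have mi: "Inf X = Min c"
    proof -
      assume a: "Min c \<in> X" "\<forall>x\<in>X. Min c \<le> x"
      have "Inf X \<le> Min c" using wellorder_Inf_le1[OF a(1)] .
      moreover have "Inf X \<in> X" using wellorder_InfI[OF a(1)] .
      then have "Min c \<le> Inf X" using a(2) by blast
      ultimately show ?thesis by simp
    qed
    have cZ3: "c \<subseteq> Z3" using ic(1) iseg_subset X Z5Z3 by blast
    have shV: "sh c \<in> V3" using V3_def cc(1) cZ3 by blast
    have shX: "iseg (sh c) (X - {Inf X})" using iseg_remove_min[OF ic(1) cne] mi sh_def by simp
    have c'F: "c' \<in> F" using cc C'F by blast
    have "card c' \<le> card (sh c)"
    proof -
      have "iseg (sh c) c' \<or> iseg c' (sh c)" using iseg_cmp[OF shX ic(2)] .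
      then show ?thesis
      proof
        assume "iseg (sh c) c'"
        then have "sh c = c'" using c'F shV F_def by blast
        then show ?thesis by simp
      next
        assume "iseg c' (sh c)"
        then show ?thesis using iseg_subset card_mono sh_fin[OF cc(1)] by blast
      qed
    qed
    also have "\<dots> < card c" using card_sh[OF fc cne] sh_def by simp
    finally show ?thesis .
  qed
  have "Z5 \<subseteq> Z" using Z5Z3 Z3Z by blast
  then show ?thesis using cfg' len by blast
qed

end



context bqoctx begin

lemma stage2:
  assumes c: "config C Z h"
  shows "\<exists>C' Z' h'. config C' Z' h' \<and> Z' \<subseteq> Z \<and> Z' \<subseteq> {Inf Z<..} \<and>
    (\<forall>X\<subseteq>Z'. infinite X \<longrightarrow> (\<forall>c\<in>C. \<forall>c'\<in>C'. iseg c X \<longrightarrow> iseg c' (X - {Inf X}) \<longrightarrow> card c' < card c))"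
proof -
  define Zr where "Zr = Z \<inter> {Inf Z<..}"
  have "Z - {..Inf Z} \<subseteq> Zr" unfolding Zr_def by auto
  moreover have "infinite (Z - {..Inf Z})" using configD(1)[OF c] by simp
  ultimately have Zr: "Zr \<subseteq> Z" "infinite Zr" using finite_subset Zr_def by blast+
  have cr: "config {s\<in>C. s \<subseteq> Zr} Zr h" using config_restrict[OF c Zr] .
  obtain C' Z' h' where r: "config C' Z' h'" "Z' \<subseteq> Zr"
    and len: "\<forall>X\<subseteq>Z'. infinite X \<longrightarrow> (\<forall>c\<in>{s\<in>C. s \<subseteq> Zr}. \<forall>c'\<in>C'. iseg c X \<longrightarrow> iseg c' (X - {Inf X}) \<longrightarrow> card c' < card c)"
    using stage[OF cr] by blast
  have "\<forall>X\<subseteq>Z'. infinite X \<longrightarrow> (\<forall>c\<in>C. \<forall>c'\<in>C'. iseg c X \<longrightarrow> iseg c' (X - {Inf X}) \<longrightarrow> card c' < card c)"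
  proof (intro allI impI ballI)
    fix X c c' assume X: "X \<subseteq> Z'" "infinite X" and cc: "c \<in> C" "c' \<in> C'" and i: "iseg c X" "iseg c' (X - {Inf X})"
    have "c \<subseteq> Zr" using i(1) iseg_subset X r(2) by blast
    then show "card c' < card c" using len X cc i by blast
  qed
  moreover have "Z' \<subseteq> Z" "Z' \<subseteq> {Inf Z<..}" using r(2) Zr_def by auto
  ultimately show ?thesis using r(1) by blast
qed

definition ok :: "nat set set \<times> nat set \<times> (nat set \<Rightarrow> 'a) \<Rightarrow> bool" where
  "ok st \<longleftrightarrow> config (fst st) (fst (snd st)) (snd (snd st))"

definition R :: "nat set set \<times> nat set \<times> (nat set \<Rightarrow> 'a) \<Rightarrow> nat set set \<times> nat set \<times> (nat set \<Rightarrow> 'a) \<Rightarrow> bool" where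
  "R st st' \<longleftrightarrow> ok st' \<and> fst (snd st') \<subseteq> fst (snd st) \<and> fst (snd st') \<subseteq> {Inf (fst (snd st))<..} \<and>
    (\<forall>X\<subseteq>fst (snd st'). infinite X \<longrightarrow> (\<forall>c\<in>fst st. \<forall>c'\<in>fst st'.
        iseg c X \<longrightarrow> iseg c' (X - {Inf X}) \<longrightarrow> card c' < card c))"

lemma exR: "ok st \<Longrightarrow> \<exists>st'. R st st'"
proof -
  assume "ok st"
  then have c: "config (fst st) (fst (snd st)) (snd (snd st))" unfolding ok_def .
  obtain C' Z' h' where "config C' Z' h' \<and> Z' \<subseteq> fst (snd st) \<and> Z' \<subseteq> {Inf (fst (snd st))<..} \<and>
    (\<forall>X\<subseteq>Z'. infinite X \<longrightarrow> (\<forall>c\<in>fst st. \<forall>c'\<in>C'. iseg c X \<longrightarrow> iseg c' (X - {Inf X}) \<longrightarrow> card c' < card c))"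
    using stage2[OF c] by blast
  then have "R st (C', Z', h')" unfolding R_def ok_def by simp
  then show ?thesis by blast
qed

lemma no_config: "\<not> config C Z h"
proof
  assume c0: "config C Z h"
  define cfg where "cfg = rec_nat (C, Z, h) (\<lambda>k st. SOME st'. R st st')"
  have cfg0: "cfg 0 = (C, Z, h)" unfolding cfg_def by simp
  have cfgS: "cfg (Suc k) = (SOME st'. R (cfg k) st')" for k unfolding cfg_def by simp
  have okk: "ok (cfg k) \<and> R (cfg k) (cfg (Suc k))" for k
  proof (induction k)
    case 0
    have o: "ok (cfg 0)" using c0 cfg0 unfolding ok_def by simp
    have "R (cfg 0) (cfg (Suc 0))" unfolding cfgS by (rule someI_ex[OF exR[OF o]])
    then show ?case using o by blast
  next
    case (Suc k)
    then have o: "ok (cfg (Suc k))" unfolding R_def by blast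
    have "R (cfg (Suc k)) (cfg (Suc (Suc k)))" unfolding cfgS[of "Suc k"] by (rule someI_ex[OF exR[OF o]])
    then show ?case using o by blast
  qed
  define Cs where "Cs = (\<lambda>k. fst (cfg k))"
  define Zs where "Zs = (\<lambda>k. fst (snd (cfg k)))"
  have cfgk: "config (Cs k) (Zs k) (snd (snd (cfg k)))" for k using okk Cs_def Zs_def unfolding ok_def by blast
  have Rk: "R (cfg k) (cfg (Suc k))" for k using okk by blast
  have Zdec: "Zs (Suc k) \<subseteq> Zs k" for k using Rk[of k] Zs_def unfolding R_def by blast
  have Zgt: "Zs (Suc k) \<subseteq> {Inf (Zs k)<..}" for k using Rk[of k] Zs_def unfolding R_def by blast
  have Zmono: "j \<le> k \<Longrightarrow> Zs k \<subseteq> Zs j" for j k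
    by (induction k rule: dec_induct) (use Zdec in auto)
  have Zinf: "infinite (Zs k)" for k using configD(1)[OF cfgk] .
  define y where "y = (\<lambda>k. Inf (Zs (Suc k)))"
  have yZ: "y k \<in> Zs (Suc k)" for k using Zinf[of "Suc k"] y_def wellorder_InfI
    by (metis infinite_imp_nonempty ex_in_conv)
  have ysuc: "y k < y (Suc k)" for k using yZ[of "Suc k"] Zgt[of "Suc k"] y_def by auto
  have sm: "strict_mono y" using ysuc by (simp add: strict_mono_Suc_iff)
  define Xs where "Xs = (\<lambda>k. y ` {k..})"
  have XsZ: "Xs k \<subseteq> Zs (Suc k)" for k
  proof
    fix x assume "x \<in> Xs k"
    then obtain j where j: "j \<ge> k" "x = y j" using Xs_def by auto
    then show "x \<in> Zs (Suc k)" using yZ[of j] Zmono[of "Suc k" "Suc j"] by auto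
  qed
  have Xsinf: "infinite (Xs k)" for k
  proof -
    have "inj_on y {k..}" using sm strict_mono_imp_inj_on by (metis inj_on_subset subset_UNIV)
    moreover have "infinite {k::nat..}"
    proof
      assume "finite {k::nat..}"
      then obtain m where m: "\<forall>x\<in>{k..}. x \<le> m" using finite_nat_set_iff_bounded_le by blast
      have "Suc (m + k) \<in> {k..}" by simp
      then have "Suc (m + k) \<le> m" using m by blast
      then show False by simp
    qed
    ultimately show ?thesis using Xs_def finite_imageD by blast
  qed
  have XsInf: "Inf (Xs k) = y k" for k
  proof -
    have a: "y k \<in> Xs k" using Xs_def by simp
    have b: "\<forall>x\<in>Xs k. y k \<le> x" using Xs_def sm by (auto simp: strict_mono_less_eq)
    have "Inf (Xs k) \<le> y k" using wellorder_Inf_le1[OF a] .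
    moreover have "y k \<le> Inf (Xs k)" using b wellorder_InfI[OF a] by blast
    ultimately show ?thesis by simp
  qed
  have XsS: "Xs k - {Inf (Xs k)} = Xs (Suc k)" for k
  proof -
    have "Xs k - {y k} = Xs (Suc k)"
    proof
      show "Xs k - {y k} \<subseteq> Xs (Suc k)"
      proof
        fix x assume "x \<in> Xs k - {y k}"
        then obtain j where "j \<ge> k" "x = y j" "j \<noteq> k" using Xs_def by auto
        then show "x \<in> Xs (Suc k)" using Xs_def by auto
      qed
      show "Xs (Suc k) \<subseteq> Xs k - {y k}"
      proof
        fix x assume "x \<in> Xs (Suc k)"
        then obtain j where j: "j \<ge> Suc k" "x = y j" using Xs_def by auto
        then have "y k < x" using sm by (simp add: strict_mono_less)
        then show "x \<in> Xs k - {y k}" using j Xs_def by auto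
      qed
    qed
    then show ?thesis using XsInf by simp
  qed
  have excm: "\<exists>c. c \<in> Cs k \<and> iseg c (Xs k)" for k
  proof -
    have xz: "Xs k \<subseteq> Zs k" using XsZ Zdec by blast
    then show ?thesis using configD(5)[OF cfgk[of k] xz Xsinf[of k]] by blast
  qed
  define cm where "cm = (\<lambda>k. SOME c. c \<in> Cs k \<and> iseg c (Xs k))"
  have cmk: "cm k \<in> Cs k \<and> iseg (cm k) (Xs k)" for k unfolding cm_def by (rule someI_ex[OF excm])
  have dec: "card (cm (Suc k)) < card (cm k)" for k
  proof -
    have lp: "\<forall>X\<subseteq>Zs (Suc k). infinite X \<longrightarrow> (\<forall>c\<in>Cs k. \<forall>c'\<in>Cs (Suc k).
        iseg c X \<longrightarrow> iseg c' (X - {Inf X}) \<longrightarrow> card c' < card c)"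
      using Rk[of k] Cs_def Zs_def unfolding R_def by blast
    have "iseg (cm (Suc k)) (Xs k - {Inf (Xs k)})" using cmk[of "Suc k"] XsS by simp
    then show ?thesis using lp XsZ[of k] Xsinf[of k] cmk[of k] cmk[of "Suc k"] by blast
  qed
  have "card (cm k) + k \<le> card (cm 0)" for k
  proof (induction k)
    case 0 then show ?case by simp
  next
    case (Suc k) then show ?case using dec[of k] by simp
  qed
  then show False by (metis add_leD2 not_less_eq_eq)
qed

end

theorem corollary1p2:
  fixes P :: "'a set" and le :: "'a \<Rightarrow> 'a \<Rightarrow> bool"
  assumes "poset_on P le"
    and "wqo_on P le"
    and "bqo_on (nonprincipal_ideals P le) (\<subseteq>)"
  shows "bqo_on P le"
proof -
  interpret bqoctx P le using assms by unfold_locales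
  have qo: "quasi_order_on P le" using assms(1) unfolding poset_on_def by blast
  have "alpha_bqo_on \<alpha> P le" for \<alpha> :: "nat rel"
    unfolding alpha_bqo_on_def
  proof (intro allI impI)
    fix B and f :: "nat set \<Rightarrow> 'a" assume B: "barrier B" and fB: "f ` B \<subseteq> P"
    show "good_map B le f"
    proof (rule ccontr)
      assume ng: "\<not> good_map B le f"
      have fin: "\<forall>s\<in>B. finite s" using B unfolding barrier_def by blast
      have infU: "infinite (\<Union>B)"
      proof
        assume "finite (\<Union>B)"
        then have "finite (Pow (\<Union>B))" by simp
        moreover have "B \<subseteq> Pow (\<Union>B)" by blast
        ultimately have "finite B" using finite_subset by blast
        then show False using B unfolding barrier_def by blast
      qed
      have p2: "\<forall>s\<in>B. finite s \<and> s \<subseteq> \<Union>B" using fin by blast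
      have p3: "\<forall>s\<in>B. \<forall>t\<in>B. \<not> s \<subset> t" using B unfolding barrier_def by blast
      have p4: "\<forall>X\<subseteq>\<Union>B. infinite X \<longrightarrow> (\<exists>s\<in>B. iseg s X)" using B unfolding barrier_def by blast
      have p5: "\<forall>s\<in>B. f s \<in> P" using fB by blast
      have p6: "\<forall>s\<in>B. \<forall>t\<in>B. s \<lhd>\<^sub>B t \<longrightarrow> \<not> le (f s) (f t)" using ng unfolding good_map_def by blast
      have "config B (\<Union>B) f" unfolding config_def by (intro conjI infU p2 p3 p4 p5 p6)
      then show False using no_config by blast
    qed
  qed
  then show ?thesis unfolding bqo_on_def using qo by blast
qed


end
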